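(* Let $d:a\mapsto a'$ be a Hardy type series derivation on $\mathbb{K}$. Let $a\in\mathbb{K}^*$ with $a\not\asymp 1$. Then $$\mathrm{LT}\!\left(\frac{a'}{a}\right)=\mathrm{LE}(a)\,\mathrm{LT}\!\left(\frac{\mathrm{LF}(a)'}{\mathrm{LF}(a)}\right);$$ more precisely $\mathrm{LM}(a'/a)=\theta^{(\mathrm{LF}(a))}$ and $\mathrm{LC}(a'/a)=\mathrm{LE}(a)\,\mathrm{LC}\big(\mathrm{LF}(a)'/\mathrm{LF}(a)\big)$. In particular, $\hat\theta$ equals the greatest lower bound (with respect to $\preccurlyeq$) of $\Psi=\{\mathrm{LM}(b'/b): b\in\mathbb{K}^*,\ b\not\asymp 1\}$.
   Context: Let $(\Phi,\preccurlyeq)$ be a totally ordered set; $\mathbf{H}(\Phi)$ is the group of formal products $\gamma=\prod_{\phi}\phi^{\gamma_\phi}$, $\gamma_\phi\in\mathbb{R}$, with anti-well-ordered support $\operatorname{supp}\gamma=\{\phi:\gamma_\phi\neq0\}$, pointwise multiplication and anti-lexicographic order ($\gamma\succ1$ iff the exponent of $\max\operatorname{supp}\gamma$ is positive); $\Phi\subseteq\mathbf H(\Phi)$ via $\phi=\phi^1$. Fix a subgroup $\Gamma\supseteq\Phi$ of $\mathbf H(\Phi)$. For $1\ne\gamma$: $\mathrm{LF}(\gamma)=\max\operatorname{supp}\gamma$, $\mathrm{LE}(\gamma)=\gamma_{\mathrm{LF}(\gamma)}$. $\mathbb{K}=\mathbb{R}((\Gamma))$: formal series $\sum a_\alpha\alpha$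 with anti-well-ordered support $\operatorname{Supp}a\subseteq\Gamma$. For $a\ne0$: $\mathrm{LM}(a)=\max\operatorname{Supp}a$, $\mathrm{LC}(a)$ its coefficient, $\mathrm{LT}(a)=\mathrm{LC}(a)\mathrm{LM}(a)$, $\mathrm{LF}(a)=\mathrm{LF}(\mathrm{LM}(a))$, $\mathrm{LE}(a)=\mathrm{LE}(\mathrm{LM}(a))$. $a\preccurlyeq b$ iff $\mathrm{LM}(a)\preccurlyeq\mathrm{LM}(b)$; $a\asymp b$ iff $\mathrm{LM}(a)=\mathrm{LM}(b)$; $|a|=\max(\mathrm{LM}(a),\mathrm{LM}(a)^{-1})$; $a,b\succ1$ are comparable iff $\mathrm{LF}(a)=\mathrm{LF}(b)$. Summable families: union of supports anti-well-ordered, each monomial in finitely many supports; sums coefficientwise. A series derivation is a map $a\mapsto a'$ on $\mathbb{K}$ with $1'=0$, $\alpha'=\alpha\sum_{\phi\in\operatorname{supp}\alpha}\alpha_\phi\phi'/\phi$ for $\alpha=\prod\phi^{\alpha_\phi}\in\Gamma$, and $a'=\sum a_\alpha\alpha'$ (summable families). It is of Hardy type if: (HD1) its field of constants is $\mathbb{R}$; (HD2) for all $a,b\in\mathbb{K}^*$ with $a,b\not\asymp1$: $a\preccurlyeq b\iff a'\preccurlyeq b'$; (HD3) for all $a,b$ with $|a|\succ|b|\succ1$: $a'/a\succcurlyeq b'/b$, with $a'/a\asymp b'/b$ iff $a$ and $b$ are comparable. Notation: $\theta^{(\phi)}=\mathrm{LM}(\phi'/\phi)$ for $\phi\in\Phi$,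 $\Theta=\{\theta^{(\phi)}:\phi\in\Phi\}$, and $\hat\theta$ is the greatest lower bound of $\Theta$ in $(\Gamma,\preccurlyeq)$ when it exists. *)

theory Defs
  imports Complex_Main
begin

text \<open>Phi is modelled by a linearly ordered type 'p.  An element gamma of H(Phi)
  (written multiplicatively in the paper) is represented by its exponent function
  'p => real; the group operation is pointwise addition of exponents.\<close>

type_synonym 'p mon = "'p \<Rightarrow> real"
type_synonym 'p series = "'p mon \<Rightarrow> real"

definition gone :: "'p mon" where "gone = (\<lambda>_. 0)"
definition gmul :: "'p mon \<Rightarrow> 'p mon \<Rightarrow> 'p mon" where "gmul g h = (\<lambda>x. g x + h x)"
definition ginv :: "'p mon \<Rightarrow> 'p mon" where "ginv g = (\<lambda>x. - g x)"
definition gsupp :: "'p mon \<Rightarrow> 'p set" where "gsupp g = {x. g x \<noteq> 0}"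

text \<open>phi as the element phi^1 of H(Phi)\<close>
definition ind :: "'p \<Rightarrow> 'p mon" where "ind p = (\<lambda>x. if x = p then 1 else 0)"

definition anti_wo :: "'p::linorder set \<Rightarrow> bool" where
  "anti_wo S \<longleftrightarrow> wf {(x, y). x \<in> S \<and> y \<in> S \<and> y < x}"

definition Hgrp :: "('p::linorder) mon set" where
  "Hgrp = {g. anti_wo (gsupp g)}"

definition LFm :: "('p::linorder) mon \<Rightarrow> 'p" where
  "LFm g = (THE p. g p \<noteq> 0 \<and> (\<forall>q>p. g q = 0))"
definition LEm :: "('p::linorder) mon \<Rightarrow> real" where
  "LEm g = g (LFm g)"

definition gpos :: "('p::linorder) mon \<Rightarrow> bool" where
  "gpos g \<longleftrightarrow> (\<exists>p. g p > 0 \<and> (\<forall>q>p. g q = 0))"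
definition mless :: "('p::linorder) mon \<Rightarrow> 'p mon \<Rightarrow> bool" where
  "mless g h \<longleftrightarrow> gpos (gmul h (ginv g))"
definition mle :: "('p::linorder) mon \<Rightarrow> 'p mon \<Rightarrow> bool" where
  "mle g h \<longleftrightarrow> g = h \<or> mless g h"
definition mabs :: "('p::linorder) mon \<Rightarrow> 'p mon" where
  "mabs g = (if mless gone g then g else ginv g)"

definition good_group :: "('p::linorder) mon set \<Rightarrow> bool" where
  "good_group G \<longleftrightarrow> G \<subseteq> Hgrp \<and> gone \<in> G \<and> (\<forall>g\<in>G. \<forall>h\<in>G. gmul g h \<in> G)
     \<and> (\<forall>g\<in>G. ginv g \<in> G) \<and> (\<forall>p. ind p \<in> G)"

definition Supp :: "'p series \<Rightarrow> 'p mon set" where "Supp a = {g. a g \<noteq> 0}"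

definition anti_wo_m :: "('p::linorder) mon set \<Rightarrow> bool" where
  "anti_wo_m S \<longleftrightarrow> wf {(x, y). x \<in> S \<and> y \<in> S \<and> mless y x}"

definition is_series :: "('p::linorder) mon set \<Rightarrow> 'p series \<Rightarrow> bool" where
  "is_series G a \<longleftrightarrow> Supp a \<subseteq> G \<and> anti_wo_m (Supp a)"

definition szero :: "'p series" where "szero = (\<lambda>_. 0)"
definition mono :: "'p mon \<Rightarrow> 'p series" where "mono g = (\<lambda>h. if h = g then 1 else 0)"
definition smul :: "real \<Rightarrow> 'p series \<Rightarrow> 'p series" where "smul c a = (\<lambda>g. c * a g)"
definition stimes :: "'p series \<Rightarrow> 'p series \<Rightarrow> 'p series" where
  "stimes a b = (\<lambda>g. \<Sum>(x, y) \<in> {(x, y). a x \<noteq> 0 \<and> b y \<noteq> 0 \<and> gmul x y = g}. a x * b y)"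

definition sdiv :: "('p::linorder) mon set \<Rightarrow> 'p series \<Rightarrow> 'p series \<Rightarrow> 'p series" where
  "sdiv G b a = (THE c. is_series G c \<and> stimes c a = b)"

definition LM :: "('p::linorder) series \<Rightarrow> 'p mon" where
  "LM a = (THE g. g \<in> Supp a \<and> (\<forall>h\<in>Supp a. mle h g))"
definition LC :: "('p::linorder) series \<Rightarrow> real" where "LC a = a (LM a)"
definition LT :: "('p::linorder) series \<Rightarrow> 'p series" where "LT a = smul (LC a) (mono (LM a))"
definition LF :: "('p::linorder) series \<Rightarrow> 'p" where "LF a = LFm (LM a)"
definition LE :: "('p::linorder) series \<Rightarrow> real" where "LE a = LEm (LM a)"

definition fsummable :: "'i set \<Rightarrow> ('i \<Rightarrow> ('p::linorder) series) \<Rightarrow> bool" where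
  "fsummable I f \<longleftrightarrow> anti_wo_m (\<Union>i\<in>I. Supp (f i)) \<and> (\<forall>g. finite {i\<in>I. f i g \<noteq> 0})"
definition fsum :: "'i set \<Rightarrow> ('i \<Rightarrow> 'p series) \<Rightarrow> 'p series" where
  "fsum I f = (\<lambda>g. \<Sum>i\<in>{i\<in>I. f i g \<noteq> 0}. f i g)"

definition series_derivation :: "('p::linorder) mon set \<Rightarrow> ('p series \<Rightarrow> 'p series) \<Rightarrow> bool" where
  "series_derivation G D \<longleftrightarrow>
     (\<forall>a. is_series G a \<longrightarrow> is_series G (D a))
   \<and> D (mono gone) = szero
   \<and> (\<forall>al\<in>G. let f = (\<lambda>p. smul (al p) (sdiv G (D (mono (ind p))) (mono (ind p)))) in
        fsummable (gsupp al) f \<and> D (mono al) = stimes (mono al) (fsum (gsupp al) f))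
   \<and> (\<forall>a. is_series G a \<longrightarrow>
        (let f = (\<lambda>al. smul (a al) (D (mono al))) in
          fsummable (Supp a) f \<and> D a = fsum (Supp a) f))"

definition hardy_type :: "('p::linorder) mon set \<Rightarrow> ('p series \<Rightarrow> 'p series) \<Rightarrow> bool" where
  "hardy_type G D \<longleftrightarrow> series_derivation G D
   \<and> (\<forall>a. is_series G a \<longrightarrow> (D a = szero \<longleftrightarrow> (\<exists>c. a = smul c (mono gone))))
   \<and> (\<forall>a b. is_series G a \<and> is_series G b \<and> a \<noteq> szero \<and> b \<noteq> szero
        \<and> LM a \<noteq> gone \<and> LM b \<noteq> gone \<longrightarrow> (mle (LM a) (LM b) \<longleftrightarrow> mle (LM (D a)) (LM (D b))))
   \<and> (\<forall>a b. is_series G a \<and> is_series G b \<and> a \<noteq> szero \<and> b \<noteq> szero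
        \<and> mless (mabs (LM b)) (mabs (LM a)) \<and> mless gone (mabs (LM b)) \<longrightarrow>
          mle (LM (sdiv G (D b) b)) (LM (sdiv G (D a) a))
          \<and> (LM (sdiv G (D a) a) = LM (sdiv G (D b) b) \<longleftrightarrow> LF a = LF b))"

definition theta :: "('p::linorder) mon set \<Rightarrow> ('p series \<Rightarrow> 'p series) \<Rightarrow> 'p \<Rightarrow> 'p mon" where
  "theta G D p = LM (sdiv G (D (mono (ind p))) (mono (ind p)))"

definition is_glb :: "('p::linorder) mon set \<Rightarrow> 'p mon set \<Rightarrow> 'p mon \<Rightarrow> bool" where
  "is_glb G S g \<longleftrightarrow> g \<in> G \<and> (\<forall>s\<in>S. mle g s) \<and> (\<forall>h\<in>G. (\<forall>s\<in>S. mle h s) \<longrightarrow> mle h g)"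

end

theory Submission
  imports Defs
begin

definition awo :: "'g::linorder set \<Rightarrow> bool" where
  "awo S \<longleftrightarrow> \<not>(\<exists>f. (\<forall>i. f i \<in> S) \<and> (\<forall>i. f i < f (Suc i)))"

lemma awo_wf: "awo S \<longleftrightarrow> wf {(x, y). x \<in> S \<and> y \<in> S \<and> y < x}"
  unfolding awo_def wf_iff_no_infinite_down_chain by auto

lemma awo_subset: "awo T \<Longrightarrow> S \<subseteq> T \<Longrightarrow> awo S"
  unfolding awo_def by blast

lemma awo_max:
  assumes "awo S" "X \<subseteq> S" "X \<noteq> {}"
  shows "\<exists>m\<in>X. \<forall>x\<in>X. x \<le> m"
proof -
  have w: "wf {(x, y). x \<in> X \<and> y \<in> X \<and> y < x}"
    using awo_subset[OF assms(1,2)] awo_wf by blast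
  obtain z where z: "z \<in> X" "\<And>y. (y, z) \<in> {(x, y). x \<in> X \<and> y \<in> X \<and> y < x} \<Longrightarrow> y \<notin> X"
    using wfE_min'[OF w assms(3)] by blast
  have "\<forall>x\<in>X. x \<le> z"
  proof
    fix x assume x: "x \<in> X"
    have "\<not> z < x" using z(2)[of x] z(1) x by blast
    then show "x \<le> z" by (rule leI)
  qed
  then show ?thesis using \<open>z \<in> X\<close> by blast
qed

lemma awo_iff_max: "awo S \<longleftrightarrow> (\<forall>X \<subseteq> S. X \<noteq> {} \<longrightarrow> (\<exists>m\<in>X. \<forall>x\<in>X. x \<le> m))"
proof
  assume "awo S" then show "\<forall>X \<subseteq> S. X \<noteq> {} \<longrightarrow> (\<exists>m\<in>X. \<forall>x\<in>X. x \<le> m)"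
    using awo_max by blast
next
  assume H: "\<forall>X \<subseteq> S. X \<noteq> {} \<longrightarrow> (\<exists>m\<in>X. \<forall>x\<in>X. x \<le> m)"
  show "awo S" unfolding awo_def
  proof
    assume "\<exists>f. (\<forall>i. f i \<in> S) \<and> (\<forall>i. f i < f (Suc i))"
    then obtain f where f: "\<forall>i. f i \<in> S" "\<forall>i. f i < f (Suc i)" by blast
    then obtain m where "m \<in> range f" "\<forall>x\<in>range f. x \<le> m"
      using H[rule_format, of "range f"] by blast
    then obtain i where "m = f i" "f (Suc i) \<le> m" by blast
    moreover have "f i < f (Suc i)" using f(2) by blast
    ultimately show False by simp
  qed
qed

lemma awo_Un: "awo S \<Longrightarrow> awo T \<Longrightarrow> awo (S \<union> T)"
  unfolding awo_iff_max
proof (intro allI impI)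
  fix X assume S: "\<forall>X\<subseteq>S. X \<noteq> {} \<longrightarrow> (\<exists>m\<in>X. \<forall>x\<in>X. x \<le> m)"
    and T: "\<forall>X\<subseteq>T. X \<noteq> {} \<longrightarrow> (\<exists>m\<in>X. \<forall>x\<in>X. x \<le> m)"
    and X: "X \<subseteq> S \<union> T" "X \<noteq> {}"
  show "\<exists>m\<in>X. \<forall>x\<in>X. x \<le> m"
  proof (cases "X \<inter> S = {}")
    case True
    then show ?thesis using T[rule_format, of X] X by blast
  next
    case F1: False
    then obtain m1 where m1: "m1 \<in> X \<inter> S" "\<forall>x\<in>X \<inter> S. x \<le> m1" using S[rule_format, of "X \<inter> S"] by blast
    show ?thesis
    proof (cases "X \<inter> T = {}")
      case True
      then show ?thesis using m1 X by blast
    next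
      case False
      then obtain m2 where m2: "m2 \<in> X \<inter> T" "\<forall>x\<in>X \<inter> T. x \<le> m2" using T[rule_format, of "X \<inter> T"] by blast
      show ?thesis
      proof (cases "m1 \<le> m2")
        case True
        have "\<forall>x\<in>X. x \<le> m2"
        proof
          fix x assume "x \<in> X"
          then have "x \<in> S \<or> x \<in> T" using X by blast
          then show "x \<le> m2" using m1 m2 True \<open>x \<in> X\<close> by (meson IntI order_trans)
        qed
        then show ?thesis using m2 by blast
      next
        case False
        have "\<forall>x\<in>X. x \<le> m1"
        proof
          fix x assume "x \<in> X"
          then have "x \<in> S \<or> x \<in> T" using X by blast
          then show "x \<le> m1" using m1 m2 False \<open>x \<in> X\<close> by (meson IntI order_trans nle_le)
        qed
        then show ?thesis using m1 by blast
      qed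
    qed
  qed
qed

lemma awo_nis:
  fixes f :: "nat \<Rightarrow> 'a::linorder"
  assumes "awo S" "\<forall>i. f i \<in> S"
  shows "\<exists>r. strict_mono r \<and> (\<forall>n. f (r (Suc n)) \<le> f (r n))"
proof -
  have ex: "\<exists>n>N. \<forall>m>N. f m \<le> f n" for N
  proof -
    have sub: "f ` {m. m > N} \<subseteq> S" using assms(2) by auto
    have ne: "f ` {m. m > N} \<noteq> {}" using lessI[of N] by blast
    obtain m where m: "m \<in> f ` {m. m > N}" "\<forall>x\<in>f ` {m. m > N}. x \<le> m"
      using awo_max[OF assms(1) sub ne] by blast
    obtain n where n: "n > N" "m = f n" using m(1) by auto
    show ?thesis using m(2) n by (intro exI[of _ n]) auto
  qed
  define nx where "nx N = (SOME n. n > N \<and> (\<forall>m>N. f m \<le> f n))" for N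
  have nx: "nx N > N" "\<forall>m>N. f m \<le> f (nx N)" for N
    using someI_ex[OF ex[of N]] unfolding nx_def by auto
  define s where "s k = (nx ^^ k) 0" for k
  have sS: "s (Suc k) = nx (s k)" for k unfolding s_def by simp
  define r where "r k = s (Suc k)" for k
  have "strict_mono r" unfolding strict_mono_Suc_iff r_def using sS nx by simp
  moreover have "f (r (Suc n)) \<le> f (r n)" for n
  proof -
    have "s n < s (Suc n)" "s (Suc n) < s (Suc (Suc n))" using nx(1) sS by simp_all
    then have "r (Suc n) > s n" unfolding r_def by linarith
    then show ?thesis using nx(2)[of "s n"] sS unfolding r_def by simp
  qed
  ultimately show ?thesis by blast
qed

lemma awo_translate: "awo S \<Longrightarrow> awo ((\<lambda>x. x + c) ` (S::'g::linordered_ab_group_add set))"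
  unfolding awo_def
proof
  assume "\<not> (\<exists>f. (\<forall>i. f i \<in> S) \<and> (\<forall>i. f i < f (Suc i)))"
    "\<exists>f. (\<forall>i. f i \<in> (\<lambda>x. x + c) ` S) \<and> (\<forall>i. f i < f (Suc i))"
  then obtain f where f: "\<forall>i. f i \<in> (\<lambda>x. x + c) ` S" "\<forall>i. f i < f (Suc i)" by blast
  have "\<forall>i. f i - c \<in> S"
  proof
    fix i obtain x where "x \<in> S" "f i = x + c" using f(1) by blast
    then show "f i - c \<in> S" by simp
  qed
  moreover have "\<forall>i. f i - c < f (Suc i) - c" using f(2) by simp
  ultimately have "\<exists>f. (\<forall>i. f i \<in> S) \<and> (\<forall>i. f i < f (Suc i))"
    by (intro exI[of _ "\<lambda>i. f i - c"]) simp
  then show False using \<open>\<not> _\<close> by blast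
qed

lemma awo_sumset:
  fixes S T :: "'g::linordered_ab_group_add set"
  assumes "awo S" "awo T"
  shows "awo {s + t | s t. s \<in> S \<and> t \<in> T}"
  unfolding awo_def
proof
  assume "\<exists>f. (\<forall>i. f i \<in> {s + t |s t. s \<in> S \<and> t \<in> T}) \<and> (\<forall>i. f i < f (Suc i))"
  then obtain f where f: "\<forall>i. \<exists>s t. f i = s + t \<and> s \<in> S \<and> t \<in> T" "\<forall>i. f i < f (Suc i)" by blast
  then obtain s t where st: "\<forall>i. f i = s i + t i \<and> s i \<in> S \<and> t i \<in> T" by metis
  obtain r where r: "strict_mono r" "\<forall>n. s (r (Suc n)) \<le> s (r n)"
    using awo_nis[OF assms(1), of s] st by blast
  have sm: "strict_mono f" using f(2) strict_mono_Suc_iff by blast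
  have "t (r n) < t (r (Suc n))" for n
  proof -
    have "f (r n) < f (r (Suc n))" using sm r(1) by (simp add: strict_mono_def)
    moreover have "- s (r n) \<le> - s (r (Suc n))" using r(2) by simp
    ultimately have "f (r n) + - s (r n) < f (r (Suc n)) + - s (r (Suc n))"
      by (rule add_less_le_mono)
    moreover have "f (r n) + - s (r n) = t (r n)" "f (r (Suc n)) + - s (r (Suc n)) = t (r (Suc n))"
      using st by (simp_all add: algebra_simps)
    ultimately show ?thesis by simp
  qed
  then have "\<exists>f. (\<forall>i. f i \<in> T) \<and> (\<forall>i. f i < f (Suc i))"
    using st by (intro exI[of _ "\<lambda>n. t (r n)"]) simp
  then show False using assms(2) unfolding awo_def by blast
qed

lemma awo_finite:
  fixes S T :: "'g::linordered_ab_group_add set"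
  assumes "awo S" "awo T"
  shows "finite {s \<in> S. g - s \<in> T}"
proof (rule ccontr)
  assume "infinite {s \<in> S. g - s \<in> T}"
  then obtain e :: "nat \<Rightarrow> 'g" where e: "inj e" "range e \<subseteq> {s \<in> S. g - s \<in> T}"
    using infinite_countable_subset by blast
  obtain r where r: "strict_mono r" "\<forall>n. e (r (Suc n)) \<le> e (r n)"
    using awo_nis[OF assms(1), of e] e by blast
  have "e (r (Suc n)) < e (r n)" for n
  proof -
    have "r n < r (Suc n)" using r(1) by (simp add: strict_mono_Suc_iff)
    then have "r (Suc n) \<noteq> r n" by simp
    then have "e (r (Suc n)) \<noteq> e (r n)" using e(1) by (simp add: inj_eq)
    then show ?thesis using r(2) by (simp add: order_less_le)
  qed
  then have "\<forall>n. g - e (r n) < g - e (r (Suc n))" by simp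
  moreover have "\<forall>n. g - e (r n) \<in> T" using e(2) by blast
  ultimately have "\<exists>f. (\<forall>i. f i \<in> T) \<and> (\<forall>i. f i < f (Suc i))"
    by (intro exI[of _ "\<lambda>n. g - e (r n)"]) simp
  then show False using assms(2) unfolding awo_def by blast
qed


inductive msum :: "'g::linordered_ab_group_add set \<Rightarrow> nat \<Rightarrow> 'g \<Rightarrow> bool" for P where
  msum0: "msum P 0 0"
| msumS: "msum P n x \<Longrightarrow> p \<in> P \<Longrightarrow> msum P (Suc n) (p + x)"

definition mon :: "'g::linordered_ab_group_add set \<Rightarrow> 'g set" where
  "mon P = {x. \<exists>n. msum P n x}"

definition len :: "'g::linordered_ab_group_add set \<Rightarrow> 'g \<Rightarrow> nat" where
  "len P x = (LEAST n. msum P n x)"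

definition bad :: "'g::linordered_ab_group_add set \<Rightarrow> (nat \<Rightarrow> 'g) \<Rightarrow> bool" where
  "bad P f \<longleftrightarrow> (\<forall>i. f i \<in> mon P) \<and> (\<forall>i. f i < f (Suc i))"

definition extd :: "'g::linordered_ab_group_add set \<Rightarrow> 'g list \<Rightarrow> bool" where
  "extd P xs \<longleftrightarrow> (\<exists>f. bad P f \<and> (\<forall>i<length xs. f i = xs ! i))"

definition stp :: "'g::linordered_ab_group_add set \<Rightarrow> 'g list \<Rightarrow> 'g" where
  "stp P xs = (SOME x. extd P (xs @ [x]) \<and> (\<forall>y. extd P (xs @ [y]) \<longrightarrow> len P x \<le> len P y))"

primrec pre :: "'g::linordered_ab_group_add set \<Rightarrow> nat \<Rightarrow> 'g list" where
  "pre P 0 = []"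
| "pre P (Suc n) = pre P n @ [stp P (pre P n)]"

declare pre.simps[simp del]

lemma msum_le0: "msum P n x \<Longrightarrow> \<forall>p\<in>P. p < 0 \<Longrightarrow> x \<le> 0"
  by (induction rule: msum.induct) (auto intro: add_nonpos_nonpos less_imp_le)

lemma mon_0: "0 \<in> mon P"
  unfolding mon_def using msum0 by blast

lemma mon_add: "x \<in> mon P \<Longrightarrow> p \<in> P \<Longrightarrow> p + x \<in> mon P"
  unfolding mon_def using msumS by blast

lemma mon_le0: "x \<in> mon P \<Longrightarrow> \<forall>p\<in>P. p < 0 \<Longrightarrow> x \<le> 0"
  unfolding mon_def using msum_le0 by blast

lemma mon_len: "x \<in> mon P \<Longrightarrow> msum P (len P x) x"
proof -
  assume "x \<in> mon P"
  then obtain n where "msum P n x" unfolding mon_def by blast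
  then show ?thesis unfolding len_def by (rule LeastI)
qed

lemma msum_len_le: "msum P n x \<Longrightarrow> len P x \<le> n"
  unfolding len_def by (rule Least_le)

lemma msum_nz:
  assumes "msum P n x" "x \<noteq> 0"
  shows "\<exists>p y. p \<in> P \<and> msum P (n - 1) y \<and> x = p + y \<and> n \<noteq> 0"
  using assms by (cases rule: msum.cases) auto

lemma length_pre: "length (pre P n) = n"
  by (induction n) (auto simp: pre.simps)

lemma pre_nth: "i < n \<Longrightarrow> pre P n ! i = stp P (pre P i)"
proof (induction n)
  case 0 then show ?case by simp
next
  case (Suc n)
  then show ?case by (cases "i = n") (auto simp: nth_append length_pre pre.simps)
qed

lemma extd_step:
  assumes "extd P xs"
  shows "extd P (xs @ [stp P xs]) \<and> (\<forall>y. extd P (xs @ [y]) \<longrightarrow> len P (stp P xs) \<le> len P y)"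
proof -
  obtain f where f: "bad P f" "\<forall>i<length xs. f i = xs ! i" using assms unfolding extd_def by blast
  have "extd P (xs @ [f (length xs)])"
    unfolding extd_def using f by (intro exI[of _ f]) (auto simp: nth_append less_Suc_eq)
  then have "\<exists>x. extd P (xs @ [x]) \<and> (\<forall>y. extd P (xs @ [y]) \<longrightarrow> len P x \<le> len P y)"
    by (rule ex_has_least_nat)
  then show ?thesis unfolding stp_def by (rule someI_ex)
qed

lemma extd_pre:
  assumes "\<exists>f. bad P f"
  shows "extd P (pre P n)"
proof (induction n)
  case 0 then show ?case using assms unfolding extd_def by (simp add: pre.simps)
next
  case (Suc n) then show ?case using extd_step[OF Suc.IH] by (simp add: pre.simps)
qed

lemma neumann:
  fixes P :: "'g::linordered_ab_group_add set"
  assumes P: "awo P" "\<forall>p\<in>P. p < 0"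
  shows "awo (mon P)"
proof (rule ccontr)
  assume "\<not> awo (mon P)"
  then have ex: "\<exists>f. bad P f" unfolding awo_def bad_def by blast
  define g where "g i = stp P (pre P i)" for i
  have pre_g: "i < n \<Longrightarrow> pre P n ! i = g i" for i n using pre_nth g_def by simp
  have gbad: "bad P g"
    unfolding bad_def
  proof (intro conjI allI)
    fix i
    obtain f where f: "bad P f" "\<forall>j<length (pre P (Suc (Suc i))). f j = pre P (Suc (Suc i)) ! j"
      using extd_pre[OF ex, of "Suc (Suc i)"] unfolding extd_def by blast
    have fi: "f i = g i" "f (Suc i) = g (Suc i)" using f(2) pre_g[of _ "Suc (Suc i)"] by (auto simp: length_pre)
    show "g i \<in> mon P" using f(1) fi unfolding bad_def by metis
    show "g i < g (Suc i)" using f(1) fi unfolding bad_def by metis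
  qed
  have gmin: "len P (g n) \<le> len P (h n)" if "bad P h" "\<forall>i<n. h i = g i" for h n
  proof -
    have "extd P (pre P n @ [h n])"
      unfolding extd_def using that
      by (intro exI[of _ h]) (auto simp: nth_append length_pre pre_g less_Suc_eq)
    then show ?thesis using extd_step[OF extd_pre[OF ex, of n]] g_def by simp
  qed
  have gsm: "strict_mono g" using gbad unfolding bad_def strict_mono_Suc_iff by blast
  have dec: "\<exists>p y. p \<in> P \<and> msum P (len P (g n) - 1) y \<and> g n = p + y \<and> len P (g n) \<noteq> 0" for n
  proof -
    have gm: "g n \<in> mon P" "g (Suc n) \<in> mon P" using gbad unfolding bad_def by blast+
    have "g n < g (Suc n)" using gbad unfolding bad_def by blast
    moreover have "g (Suc n) \<le> 0" using mon_le0[OF gm(2) P(2)] .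
    ultimately have "g n \<noteq> 0" by simp
    then show ?thesis using msum_nz[OF mon_len[OF gm(1)]] by blast
  qed
  then obtain p y where py: "\<And>n. p n \<in> P \<and> msum P (len P (g n) - 1) (y n) \<and> g n = p n + y n \<and> len P (g n) \<noteq> 0"
    by metis
  obtain r where r: "strict_mono r" "\<forall>n. p (r (Suc n)) \<le> p (r n)"
    using awo_nis[OF P(1), of p] py by blast
  define h where "h i = (if i < r 0 then g i else y (r (i - r 0)))" for i
  have hmon: "h i \<in> mon P" for i
  proof (cases "i < r 0")
    case True then show ?thesis using gbad unfolding h_def bad_def by simp
  next
    case False then show ?thesis using py unfolding h_def mon_def by auto
  qed
  have "len P (h (r 0)) < len P (g (r 0))"
  proof -
    have "h (r 0) = y (r 0)" unfolding h_def by simp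
    moreover have "msum P (len P (g (r 0)) - 1) (y (r 0))" using py[of "r 0"] by blast
    ultimately have "len P (h (r 0)) \<le> len P (g (r 0)) - 1"
      using msum_len_le by metis
    then show ?thesis using py[of "r 0"] by linarith
  qed
  then have "\<not> bad P h" using gmin[of h "r 0"] unfolding h_def by fastforce
  then obtain i where i: "\<not> h i < h (Suc i)" using hmon unfolding bad_def by blast
  then have hle: "h (Suc i) \<le> h i" by simp
  consider "Suc i < r 0" | "Suc i = r 0" | "i \<ge> r 0" by linarith
  then show False
  proof cases
    case 1
    then have "g (Suc i) \<le> g i" using hle unfolding h_def by simp
    then show False using gbad unfolding bad_def by (meson leD)
  next
    case 2
    then have "y (r 0) \<le> g i" using hle unfolding h_def by simp
    moreover have "g i < g (r 0)" using gbad 2 unfolding bad_def by (metis)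
    moreover have "g (r 0) < y (r 0)" using py[of "r 0"] P(2) by (metis add_less_same_cancel2)
    ultimately show False by simp
  next
    case 3
    define k where "k = i - r 0"
    have "Suc i - r 0 = Suc k" using 3 k_def by simp
    then have "y (r (Suc k)) \<le> y (r k)" using hle 3 unfolding h_def k_def by simp
    then have "p (r (Suc k)) + y (r (Suc k)) \<le> p (r k) + y (r k)"
      using r(2) by (simp add: add_mono)
    then have "g (r (Suc k)) \<le> g (r k)" using py by simp
    moreover have "g (r k) < g (r (Suc k))" using gsm r(1) by (simp add: strict_mono_def)
    ultimately show False by simp
  qed
qed


definition supp :: "('g \<Rightarrow> real) \<Rightarrow> 'g set" where "supp a = {g. a g \<noteq> 0}"

definition hmul :: "('g::ab_group_add \<Rightarrow> real) \<Rightarrow> ('g \<Rightarrow> real) \<Rightarrow> 'g \<Rightarrow> real" where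
  "hmul c a g = (\<Sum>(x, y)\<in>{(x, y). c x \<noteq> 0 \<and> a y \<noteq> 0 \<and> x + y = g}. c x * a y)"

lemma hmul_alt: "hmul c a g = (\<Sum>y\<in>{y\<in>supp a. g - y \<in> supp c}. c (g - y) * a y)"
proof -
  have e: "{(x, y). c x \<noteq> 0 \<and> a y \<noteq> 0 \<and> x + y = g} = (\<lambda>y. (g - y, y)) ` {y\<in>supp a. g - y \<in> supp c}"
    unfolding supp_def by (auto simp: algebra_simps image_iff)
  have i: "inj_on (\<lambda>y. (g - y, y)) {y\<in>supp a. g - y \<in> supp c}" by (auto simp: inj_on_def)
  show ?thesis unfolding hmul_def e sum.reindex[OF i] by (simp add: comp_def)
qed

lemma hmul_super:
  assumes "finite Y" "{y\<in>supp a. g - y \<in> supp c} \<subseteq> Y"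
  shows "hmul c a g = (\<Sum>y\<in>Y. c (g - y) * a y)"
  unfolding hmul_alt
  by (rule sum.mono_neutral_left[OF assms]) (auto simp: supp_def)

lemma hmul_finite:
  fixes a c :: "'g::linordered_ab_group_add \<Rightarrow> real"
  shows "awo (supp a) \<Longrightarrow> awo (supp c) \<Longrightarrow> finite {y\<in>supp a. g - y \<in> supp c}"
  by (rule awo_finite)

lemma hmul_diff:
  fixes a c1 c2 :: "'g::linordered_ab_group_add \<Rightarrow> real"
  assumes "awo (supp a)" "awo (supp c1)" "awo (supp c2)"
  shows "hmul (\<lambda>x. c1 x - c2 x) a g = hmul c1 a g - hmul c2 a g"
proof -
  let ?Y = "{y\<in>supp a. g - y \<in> supp c1} \<union> {y\<in>supp a. g - y \<in> supp c2}"
  have f: "finite ?Y" using hmul_finite assms by blast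
  have "hmul (\<lambda>x. c1 x - c2 x) a g = (\<Sum>y\<in>?Y. (c1 (g - y) - c2 (g - y)) * a y)"
    by (rule hmul_super[OF f]) (auto simp: supp_def)
  moreover have "hmul c1 a g = (\<Sum>y\<in>?Y. c1 (g - y) * a y)"
    by (rule hmul_super[OF f]) auto
  moreover have "hmul c2 a g = (\<Sum>y\<in>?Y. c2 (g - y) * a y)"
    by (rule hmul_super[OF f]) auto
  ultimately show ?thesis by (simp add: left_diff_distrib sum_subtractf)
qed

lemma hmul_lead:
  fixes a c :: "'g::linordered_ab_group_add \<Rightarrow> real"
  assumes "\<gamma> \<in> supp c" "\<forall>x\<in>supp c. x \<le> \<gamma>" "\<alpha> \<in> supp a" "\<forall>y\<in>supp a. y \<le> \<alpha>"
  shows "hmul c a (\<gamma> + \<alpha>) = c \<gamma> * a \<alpha>"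
proof -
  have "{y\<in>supp a. \<gamma> + \<alpha> - y \<in> supp c} = {\<alpha>}"
  proof (intro equalityI subsetI)
    fix y assume y: "y \<in> {y\<in>supp a. \<gamma> + \<alpha> - y \<in> supp c}"
    then have "y \<le> \<alpha>" "\<gamma> + \<alpha> - y \<le> \<gamma>" using assms by auto
    then have "y = \<alpha>" by (simp add: algebra_simps)
    then show "y \<in> {\<alpha>}" by simp
  next
    fix y assume "y \<in> {\<alpha>}" then show "y \<in> {y\<in>supp a. \<gamma> + \<alpha> - y \<in> supp c}" using assms by simp
  qed
  then show ?thesis unfolding hmul_alt by simp
qed

lemma hmul_above:
  fixes a c :: "'g::linordered_ab_group_add \<Rightarrow> real"
  assumes "\<forall>x\<in>supp c. x \<le> \<gamma>" "\<forall>y\<in>supp a. y \<le> \<alpha>" "\<gamma> + \<alpha> < g"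
  shows "hmul c a g = 0"
proof -
  have e: "{y\<in>supp a. g - y \<in> supp c} = {}"
  proof (intro equalityI subsetI)
    fix y assume y: "y \<in> {y\<in>supp a. g - y \<in> supp c}"
    then have "y \<le> \<alpha>" "g - y \<le> \<gamma>" using assms by auto
    then have "g \<le> \<gamma> + y" "\<gamma> + y \<le> \<gamma> + \<alpha>" by (simp_all add: algebra_simps)
    then have "g \<le> \<gamma> + \<alpha>" by (rule order_trans)
    then show "y \<in> {}" using assms(3) by simp
  qed simp
  show ?thesis by (simp only: hmul_alt e sum.empty)
qed

lemma supp_diff: "supp (\<lambda>x. c1 x - c2 x) \<subseteq> supp c1 \<union> supp c2"
  unfolding supp_def by auto

lemma hmul_unique:
  fixes a c1 c2 :: "'g::linordered_ab_group_add \<Rightarrow> real"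
  assumes "awo (supp a)" "supp a \<noteq> {}" "awo (supp c1)" "awo (supp c2)" "hmul c1 a = hmul c2 a"
  shows "c1 = c2"
proof (rule ccontr)
  assume ne: "c1 \<noteq> c2"
  let ?d = "\<lambda>x. c1 x - c2 x"
  have ad: "awo (supp ?d)" using awo_subset[OF awo_Un[OF assms(3,4)] supp_diff] .
  have "supp ?d \<noteq> {}" using ne unfolding supp_def by (auto simp: fun_eq_iff)
  then obtain \<gamma> where g: "\<gamma> \<in> supp ?d" "\<forall>x\<in>supp ?d. x \<le> \<gamma>" using awo_max[OF ad] by blast
  obtain \<alpha> where al: "\<alpha> \<in> supp a" "\<forall>x\<in>supp a. x \<le> \<alpha>" using awo_max[OF assms(1) _ assms(2)] by blast
  have "hmul ?d a (\<gamma> + \<alpha>) = ?d \<gamma> * a \<alpha>" by (rule hmul_lead[OF g al])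
  moreover have "?d \<gamma> * a \<alpha> \<noteq> 0" using g(1) al(1) unfolding supp_def by simp
  moreover have "hmul ?d a (\<gamma> + \<alpha>) = 0" using hmul_diff[OF assms(1,3,4)] assms(5) by simp
  ultimately show False by simp
qed


lemma hdiv_exists:
  fixes a b :: "'g::linordered_ab_group_add \<Rightarrow> real" and H :: "'g set"
  assumes H: "0 \<in> H" "\<forall>x\<in>H. \<forall>y\<in>H. x + y \<in> H" "\<forall>x\<in>H. - x \<in> H"
    and a: "supp a \<subseteq> H" "awo (supp a)" "supp a \<noteq> {}"
    and b: "supp b \<subseteq> H" "awo (supp b)"
  shows "\<exists>c. supp c \<subseteq> H \<and> awo (supp c) \<and> hmul c a = b"
proof -
  obtain \<alpha> where al: "\<alpha> \<in> supp a" "\<forall>y\<in>supp a. y \<le> \<alpha>" using awo_max[OF a(2) _ a(3)] by blast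
  have aH: "\<alpha> \<in> H" "- \<alpha> \<in> H" using al a(1) H by auto
  define P where "P = (\<lambda>y. y + - \<alpha>) ` (supp a - {\<alpha>})"
  have Pneg: "\<forall>p\<in>P. p < 0"
  proof
    fix p assume "p \<in> P"
    then obtain y where "y \<in> supp a" "y \<noteq> \<alpha>" "p = y + - \<alpha>" unfolding P_def by blast
    then show "p < 0" using al(2) by (simp add: order_less_le)
  qed
  have Pawo: "awo P" unfolding P_def by (rule awo_translate[OF awo_subset[OF a(2)]]) blast
  have PH: "P \<subseteq> H"
  proof
    fix p assume "p \<in> P"
    then obtain y where "y \<in> supp a" "p = y + - \<alpha>" unfolding P_def by blast
    moreover have "y + - \<alpha> \<in> H" using H(2) aH(2) a(1) \<open>y \<in> supp a\<close> by blast
    ultimately show "p \<in> H" by simp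
  qed
  define S0 where "S0 = (\<lambda>x. x + - \<alpha>) ` supp b"
  have S0awo: "awo S0" unfolding S0_def by (rule awo_translate[OF b(2)])
  have S0H: "S0 \<subseteq> H"
  proof
    fix p assume "p \<in> S0"
    then obtain y where "y \<in> supp b" "p = y + - \<alpha>" unfolding S0_def by blast
    moreover have "y + - \<alpha> \<in> H" using H(2) aH(2) b(1) \<open>y \<in> supp b\<close> by blast
    ultimately show "p \<in> H" by simp
  qed
  define M where "M = {s + m | s m. s \<in> S0 \<and> m \<in> mon P}"
  have Mawo: "awo M" unfolding M_def by (rule awo_sumset[OF S0awo neumann[OF Pawo Pneg]])
  have Mcl: "x + q \<in> M" if xM: "x \<in> M" and qP: "q \<in> P" for x q
  proof -
    obtain s m where "x = s + m" "s \<in> S0" "m \<in> mon P" using xM unfolding M_def by blast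
    moreover have "q + m \<in> mon P" using mon_add[OF \<open>m \<in> mon P\<close> qP] .
    moreover have "x + q = s + (q + m)" using \<open>x = s + m\<close> by (simp add: algebra_simps)
    ultimately show ?thesis unfolding M_def by blast
  qed
  have S0M: "S0 \<subseteq> M" unfolding M_def using mon_0 by force
  have monH: "msum P n x \<Longrightarrow> x \<in> H" for n x
    by (induction rule: msum.induct) (use H PH in auto)
  have MH: "M \<subseteq> H" unfolding M_def mon_def using S0H monH H by blast
  define R where "R = {(x, y). x \<in> M \<and> y \<in> M \<and> y < x}"
  have wfR: "wf R" using Mawo awo_wf unfolding R_def by blast
  define Q where "Q h = {q\<in>P. h - q \<in> M}" for h
  have Qfin: "finite (Q h)" for h unfolding Q_def by (rule awo_finite[OF Pawo Mawo])
  define F where "F c' h = (if h \<in> M then (b (h + \<alpha>) - (\<Sum>q\<in>Q h. a (\<alpha> + q) * c' (h - q))) / a \<alpha> else 0)"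
    for c' :: "'g \<Rightarrow> real" and h
  define c where "c = wfrec R F"
  have ceq: "c h = F c h" for h
  proof -
    have "c h = F (cut c R h) h" unfolding c_def by (rule wfrec[OF wfR])
    also have "\<dots> = F c h"
    proof (cases "h \<in> M")
      case True
      have "(\<Sum>q\<in>Q h. a (\<alpha> + q) * cut c R h (h - q)) = (\<Sum>q\<in>Q h. a (\<alpha> + q) * c (h - q))"
      proof (rule sum.cong)
        fix q assume "q \<in> Q h"
        then have "(h - q, h) \<in> R" using True Pneg unfolding Q_def R_def by auto
        then show "a (\<alpha> + q) * cut c R h (h - q) = a (\<alpha> + q) * c (h - q)" unfolding cut_def by simp
      qed simp
      then show ?thesis unfolding F_def using True by simp
    next
      case False then show ?thesis unfolding F_def by simp
    qed
    finally show ?thesis .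
  qed
  have cM: "supp c \<subseteq> M"
  proof
    fix x assume "x \<in> supp c"
    then have "c x \<noteq> 0" unfolding supp_def by simp
    then show "x \<in> M" using ceq[of x] unfolding F_def by (auto split: if_splits)
  qed
  have cawo: "awo (supp c)" by (rule awo_subset[OF Mawo cM])
  have prod: "hmul c a g = b g" for g
  proof -
    define Y where "Y = {y\<in>supp a. g - y \<in> M}"
    have Yf: "finite Y" unfolding Y_def by (rule awo_finite[OF a(2) Mawo])
    have "hmul c a g = (\<Sum>y\<in>Y. c (g - y) * a y)"
      by (rule hmul_super[OF Yf]) (use cM in \<open>auto simp: Y_def\<close>)
    also have "\<dots> = (if \<alpha> \<in> Y then c (g - \<alpha>) * a \<alpha> else 0) + (\<Sum>y\<in>Y - {\<alpha>}. c (g - y) * a y)"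
    proof (cases "\<alpha> \<in> Y")
      case True then show ?thesis using sum.remove[OF Yf True] by simp
    next
      case False then show ?thesis by simp
    qed
    also have "Y - {\<alpha>} = (\<lambda>q. \<alpha> + q) ` Q (g - \<alpha>)"
    proof (intro equalityI subsetI)
      fix y assume "y \<in> Y - {\<alpha>}"
      then have y: "y \<in> supp a" "y \<noteq> \<alpha>" "g - y \<in> M" unfolding Y_def by auto
      have "y + - \<alpha> \<in> P" unfolding P_def using y by blast
      moreover have "g - \<alpha> - (y + - \<alpha>) = g - y" by (simp add: algebra_simps)
      ultimately have "y + - \<alpha> \<in> Q (g - \<alpha>)" unfolding Q_def using y by simp
      moreover have "y = \<alpha> + (y + - \<alpha>)" by (simp add: algebra_simps)
      ultimately show "y \<in> (\<lambda>q. \<alpha> + q) ` Q (g - \<alpha>)" by blast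
    next
      fix y assume "y \<in> (\<lambda>q. \<alpha> + q) ` Q (g - \<alpha>)"
      then obtain q where q: "q \<in> P" "g - \<alpha> - q \<in> M" "y = \<alpha> + q" unfolding Q_def by blast
      then obtain z where z: "z \<in> supp a" "z \<noteq> \<alpha>" "q = z + - \<alpha>" unfolding P_def by blast
      then have "y = z" using q by (simp add: algebra_simps)
      moreover have "g - y = g - \<alpha> - q" using q by (simp add: algebra_simps)
      ultimately show "y \<in> Y - {\<alpha>}" using z q unfolding Y_def by simp
    qed
    also have "(\<Sum>y\<in>(\<lambda>q. \<alpha> + q) ` Q (g - \<alpha>). c (g - y) * a y) = (\<Sum>q\<in>Q (g - \<alpha>). a (\<alpha> + q) * c (g - \<alpha> - q))"
      by (subst sum.reindex) (auto simp: inj_on_def algebra_simps)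
    finally have hm: "hmul c a g = (if \<alpha> \<in> Y then c (g - \<alpha>) * a \<alpha> else 0) + (\<Sum>q\<in>Q (g - \<alpha>). a (\<alpha> + q) * c (g - \<alpha> - q))" .
    show ?thesis
    proof (cases "g - \<alpha> \<in> M")
      case True
      then have "\<alpha> \<in> Y" unfolding Y_def using al by simp
      moreover have "c (g - \<alpha>) * a \<alpha> = b g - (\<Sum>q\<in>Q (g - \<alpha>). a (\<alpha> + q) * c (g - \<alpha> - q))"
        using ceq[of "g - \<alpha>"] True al(1) unfolding F_def supp_def by simp
      ultimately show ?thesis using hm by simp
    next
      case False
      then have "\<alpha> \<notin> Y" unfolding Y_def by simp
      moreover have "Q (g - \<alpha>) = {}"
      proof -
        { fix q assume "q \<in> Q (g - \<alpha>)"
          then have "g - \<alpha> - q + q \<in> M" using Mcl unfolding Q_def by blast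
          then have False using False by simp }
        then show ?thesis by blast
      qed
      moreover have "b g = 0"
      proof (rule ccontr)
        assume "b g \<noteq> 0"
        then have "g + - \<alpha> \<in> S0" unfolding S0_def supp_def by blast
        then show False using S0M False by auto
      qed
      ultimately show ?thesis using hm by simp
    qed
  qed
  show ?thesis using cM MH cawo prod by (intro exI[of _ c]) auto
qed


lemma anti_wo_awo: "anti_wo S = awo S"
  unfolding anti_wo_def awo_wf ..

lemma gsupp_gmul: "gsupp (gmul g h) \<subseteq> gsupp g \<union> gsupp h"
  unfolding gsupp_def gmul_def by auto

lemma Hgrp_gmul: "g \<in> Hgrp \<Longrightarrow> h \<in> Hgrp \<Longrightarrow> gmul g h \<in> Hgrp"
  unfolding Hgrp_def anti_wo_awo using awo_subset[OF awo_Un gsupp_gmul] by blast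

lemma Hgrp_ginv: "g \<in> Hgrp \<Longrightarrow> ginv g \<in> Hgrp"
  unfolding Hgrp_def ginv_def gsupp_def by simp

lemma awo_single: "awo {x}"
  unfolding awo_def by auto

lemma Hgrp_gone: "gone \<in> Hgrp"
  unfolding Hgrp_def gone_def gsupp_def anti_wo_awo awo_def by simp

lemma gsupp_ind: "gsupp (ind p) = {p}"
  unfolding gsupp_def ind_def by auto

lemma Hgrp_ind: "ind p \<in> Hgrp"
  unfolding Hgrp_def anti_wo_awo by (simp add: gsupp_ind awo_single)

lemma gpos_add: "gpos u \<Longrightarrow> gpos v \<Longrightarrow> gpos (gmul u v)"
proof -
  assume "gpos u" "gpos v"
  then obtain p q where p: "u p > 0" "\<forall>r>p. u r = 0" and q: "v q > 0" "\<forall>r>q. v r = 0"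
    unfolding gpos_def by blast
  consider "p < q" | "p = q" | "q < p" by fastforce
  then show "gpos (gmul u v)"
  proof cases
    case 1 then show ?thesis unfolding gpos_def gmul_def using p q
      by (intro exI[of _ q]) (auto intro: less_trans)
  next
    case 2 then show ?thesis unfolding gpos_def gmul_def using p q
      by (intro exI[of _ q]) auto
  next
    case 3 then show ?thesis unfolding gpos_def gmul_def using p q
      by (intro exI[of _ p]) (auto intro: less_trans)
  qed
qed

lemma gpos_asym: "gpos u \<Longrightarrow> gpos (ginv u) \<Longrightarrow> False"
proof -
  assume "gpos u" "gpos (ginv u)"
  then obtain p q where p: "u p > 0" "\<forall>r>p. u r = 0" and q: "- u q > 0" "\<forall>r>q. - u r = 0"
    unfolding gpos_def ginv_def by blast
  consider "p < q" | "p = q" | "q < p" by fastforce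
  then show False
  proof cases
    case 1 then show ?thesis using p q by force
  next
    case 2 then show ?thesis using p q by force
  next
    case 3 then show ?thesis using p q by force
  qed
qed

lemma gpos_gone: "\<not> gpos gone"
  unfolding gpos_def gone_def by simp

lemma Hgrp_max:
  assumes "u \<in> Hgrp" "u \<noteq> gone"
  shows "\<exists>p. u p \<noteq> 0 \<and> (\<forall>q>p. u q = 0)"
proof -
  have "gsupp u \<noteq> {}" using assms(2) unfolding gsupp_def gone_def by (auto simp: fun_eq_iff)
  moreover have "awo (gsupp u)" using assms(1) unfolding Hgrp_def anti_wo_awo by simp
  ultimately obtain p where "p \<in> gsupp u" "\<forall>q\<in>gsupp u. q \<le> p" using awo_max by blast
  then show ?thesis unfolding gsupp_def by (intro exI[of _ p]) (auto simp: not_le[symmetric])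
qed

lemma gpos_total:
  assumes "u \<in> Hgrp" "u \<noteq> gone"
  shows "gpos u \<or> gpos (ginv u)"
proof -
  obtain p where p: "u p \<noteq> 0" "\<forall>q>p. u q = 0" using Hgrp_max[OF assms] by blast
  show ?thesis
  proof (cases "u p > 0")
    case True then show ?thesis using p unfolding gpos_def by blast
  next
    case False then have "- u p > 0" using p by simp
    then show ?thesis using p unfolding gpos_def ginv_def by (intro disjI2 exI[of _ p]) simp
  qed
qed

lemma gmul_assoc: "gmul (gmul x y) z = gmul x (gmul y z)"
  unfolding gmul_def by (simp add: algebra_simps)
lemma gmul_comm: "gmul x y = gmul y x"
  unfolding gmul_def by (simp add: algebra_simps)
lemma gmul_gone: "gmul gone x = x" "gmul x gone = x"
  unfolding gmul_def gone_def by simp_all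
lemma gmul_ginv: "gmul (ginv x) x = gone" "gmul x (ginv x) = gone"
  unfolding gmul_def gone_def ginv_def by simp_all
lemma ginv_gmul: "ginv (gmul x y) = gmul (ginv x) (ginv y)"
  unfolding gmul_def ginv_def by (simp add: fun_eq_iff)
lemma ginv_ginv: "ginv (ginv x) = x"
  unfolding ginv_def by simp
lemma ginv_gone: "ginv gone = gone"
  unfolding ginv_def gone_def by simp

typedef (overloaded) ('p::linorder) hm = "Hgrp :: 'p mon set"
  using Hgrp_gone by blast

instantiation hm :: (linorder) linordered_ab_group_add
begin
definition zero_hm_def: "0 = Abs_hm gone"
definition plus_hm_def: "x + y = Abs_hm (gmul (Rep_hm x) (Rep_hm y))"
definition uminus_hm_def: "- x = Abs_hm (ginv (Rep_hm x))"
definition minus_hm_def: "x - y = Abs_hm (gmul (Rep_hm x) (ginv (Rep_hm y)))"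
definition less_hm_def: "x < y \<longleftrightarrow> mless (Rep_hm x) (Rep_hm y)"
definition less_eq_hm_def: "x \<le> y \<longleftrightarrow> x = y \<or> mless (Rep_hm x) (Rep_hm y)"

lemma Rep_plus: "Rep_hm (x + y) = gmul (Rep_hm x) (Rep_hm y)"
  unfolding plus_hm_def using Rep_hm Hgrp_gmul Abs_hm_inverse by blast
lemma Rep_uminus: "Rep_hm (- x) = ginv (Rep_hm x)"
  unfolding uminus_hm_def using Rep_hm Hgrp_ginv Abs_hm_inverse by blast
lemma Rep_minus: "Rep_hm (x - y) = gmul (Rep_hm x) (ginv (Rep_hm y))"
  unfolding minus_hm_def using Rep_hm Hgrp_gmul Hgrp_ginv Abs_hm_inverse by blast
lemma Rep_zero: "Rep_hm 0 = gone"
  unfolding zero_hm_def using Hgrp_gone Abs_hm_inverse by blast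

lemma mless_irrefl: "\<not> mless x x"
  unfolding mless_def gmul_ginv using gpos_gone by simp

lemma mless_asym: "mless x y \<Longrightarrow> mless y x \<Longrightarrow> False"
  unfolding mless_def
proof -
  assume "gpos (gmul y (ginv x))" "gpos (gmul x (ginv y))"
  moreover have "gmul x (ginv y) = ginv (gmul y (ginv x))"
    unfolding gmul_def ginv_def by (simp add: fun_eq_iff)
  ultimately show False using gpos_asym by metis
qed

lemma mless_trans: "mless x y \<Longrightarrow> mless y z \<Longrightarrow> mless x z"
  unfolding mless_def
proof -
  assume "gpos (gmul y (ginv x))" "gpos (gmul z (ginv y))"
  then have "gpos (gmul (gmul z (ginv y)) (gmul y (ginv x)))" by (rule gpos_add[rotated])
  moreover have "gmul (gmul z (ginv y)) (gmul y (ginv x)) = gmul z (ginv x)"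
    unfolding gmul_def ginv_def by (simp add: fun_eq_iff)
  ultimately show "gpos (gmul z (ginv x))" by simp
qed

lemma mless_total: "x \<in> Hgrp \<Longrightarrow> y \<in> Hgrp \<Longrightarrow> x \<noteq> y \<Longrightarrow> mless x y \<or> mless y x"
proof -
  assume H: "x \<in> Hgrp" "y \<in> Hgrp" "x \<noteq> y"
  have "gmul y (ginv x) \<in> Hgrp" using H Hgrp_gmul Hgrp_ginv by blast
  moreover have "gmul y (ginv x) \<noteq> gone"
  proof
    assume "gmul y (ginv x) = gone"
    then have "\<And>t. y t + - x t = 0" unfolding gmul_def ginv_def gone_def by metis
    then show False using H(3) by (simp add: fun_eq_iff)
  qed
  ultimately have "gpos (gmul y (ginv x)) \<or> gpos (ginv (gmul y (ginv x)))" by (rule gpos_total)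
  moreover have "ginv (gmul y (ginv x)) = gmul x (ginv y)"
    unfolding gmul_def ginv_def by (simp add: fun_eq_iff)
  ultimately show ?thesis unfolding mless_def by simp
qed

instance
proof
  fix a b c :: "'a hm"
  show "a + b + c = a + (b + c)" unfolding plus_hm_def
    by (simp add: Rep_plus[unfolded plus_hm_def] gmul_assoc)
  show "a + b = b + a" unfolding plus_hm_def by (simp add: gmul_comm)
  show "0 + a = a" unfolding plus_hm_def Rep_zero by (simp add: gmul_gone Rep_hm_inverse)
  show "- a + a = 0" unfolding plus_hm_def Rep_uminus zero_hm_def by (simp add: gmul_ginv)
  show "a - b = a + - b" unfolding plus_hm_def minus_hm_def Rep_uminus ..
  show "(a < b) = (a \<le> b \<and> \<not> b \<le> a)" unfolding less_hm_def less_eq_hm_def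
    using mless_asym mless_irrefl by blast
  show "a \<le> a" unfolding less_eq_hm_def by simp
  show "a \<le> b \<Longrightarrow> b \<le> c \<Longrightarrow> a \<le> c" unfolding less_eq_hm_def using mless_trans by blast
  show "a \<le> b \<Longrightarrow> b \<le> a \<Longrightarrow> a = b" unfolding less_eq_hm_def using mless_asym by blast
  show "a \<le> b \<or> b \<le> a" unfolding less_eq_hm_def using mless_total[OF Rep_hm Rep_hm]
    by (metis Rep_hm_inject)
  show "a \<le> b \<Longrightarrow> c + a \<le> c + b"
  proof -
    assume "a \<le> b"
    moreover have "gmul (gmul (Rep_hm c) (Rep_hm b)) (ginv (gmul (Rep_hm c) (Rep_hm a))) = gmul (Rep_hm b) (ginv (Rep_hm a))"
      unfolding gmul_def ginv_def by (simp add: fun_eq_iff)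
    ultimately show "c + a \<le> c + b" unfolding less_eq_hm_def mless_def Rep_plus by auto
  qed
qed
end


abbreviation Ab :: "('p::linorder) mon \<Rightarrow> 'p hm" where "Ab \<equiv> Abs_hm"
abbreviation Rp :: "('p::linorder) hm \<Rightarrow> 'p mon" where "Rp \<equiv> Rep_hm"

lemma Ab_inv: "x \<in> Hgrp \<Longrightarrow> Rp (Ab x) = x"
  by (rule Abs_hm_inverse)

lemma Ab_plus: "x \<in> Hgrp \<Longrightarrow> y \<in> Hgrp \<Longrightarrow> Ab (gmul x y) = Ab x + Ab y"
  by (metis Ab_inv Rep_hm_inverse Rep_plus)

lemma Ab_uminus: "x \<in> Hgrp \<Longrightarrow> Ab (ginv x) = - Ab x"
  by (metis Ab_inv Rep_hm_inverse Rep_uminus)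

lemma Ab_zero: "Ab gone = 0"
  by (simp add: zero_hm_def)

lemma Ab_inj: "x \<in> Hgrp \<Longrightarrow> y \<in> Hgrp \<Longrightarrow> Ab x = Ab y \<longleftrightarrow> x = y"
  by (metis Ab_inv)

lemma mless_hm: "x \<in> Hgrp \<Longrightarrow> y \<in> Hgrp \<Longrightarrow> mless x y \<longleftrightarrow> Ab x < Ab y"
  unfolding less_hm_def by (simp add: Ab_inv)

lemma mle_hm: "x \<in> Hgrp \<Longrightarrow> y \<in> Hgrp \<Longrightarrow> mle x y \<longleftrightarrow> Ab x \<le> Ab y"
  unfolding less_eq_hm_def mle_def by (simp add: Ab_inv Ab_inj)

definition tr :: "('p::linorder) series \<Rightarrow> 'p hm \<Rightarrow> real" where
  "tr a = (\<lambda>u. a (Rp u))"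

definition ser :: "('p::linorder) series \<Rightarrow> bool" where
  "ser a \<longleftrightarrow> Supp a \<subseteq> Hgrp \<and> anti_wo_m (Supp a)"

lemma supp_tr: "Supp a \<subseteq> Hgrp \<Longrightarrow> supp (tr a) = Ab ` Supp a"
proof (intro equalityI subsetI)
  fix u assume "u \<in> supp (tr a)"
  then have "Rp u \<in> Supp a" unfolding supp_def tr_def Supp_def by simp
  moreover have "u = Ab (Rp u)" by (simp add: Rep_hm_inverse)
  ultimately show "u \<in> Ab ` Supp a" by blast
next
  fix u assume "Supp a \<subseteq> Hgrp" "u \<in> Ab ` Supp a"
  then obtain x where "x \<in> Supp a" "u = Ab x" "x \<in> Hgrp" by blast
  then show "u \<in> supp (tr a)" unfolding supp_def tr_def Supp_def by (simp add: Ab_inv)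
qed

lemma anti_wo_m_awo:
  assumes "S \<subseteq> Hgrp"
  shows "anti_wo_m S \<longleftrightarrow> awo (Ab ` S)"
proof
  assume "anti_wo_m S"
  then have nf: "\<nexists>f. \<forall>i. (f (Suc i), f i) \<in> {(x, y). x \<in> S \<and> y \<in> S \<and> mless y x}"
    unfolding anti_wo_m_def wf_iff_no_infinite_down_chain .
  show "awo (Ab ` S)" unfolding awo_def
  proof
    assume "\<exists>f. (\<forall>i. f i \<in> Ab ` S) \<and> (\<forall>i. f i < f (Suc i))"
    then obtain f where f: "\<forall>i. f i \<in> Ab ` S" "\<forall>i. f i < f (Suc i)" by blast
    have "\<forall>i. Rp (f i) \<in> S"
    proof
      fix i obtain x where "x \<in> S" "f i = Ab x" using f(1) by blast
      moreover have "x \<in> Hgrp" using \<open>x \<in> S\<close> assms by blast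
      ultimately show "Rp (f i) \<in> S" using Ab_inv[OF \<open>x \<in> Hgrp\<close>] by simp
    qed
    moreover have "\<forall>i. mless (Rp (f i)) (Rp (f (Suc i)))" using f(2) unfolding less_hm_def by blast
    ultimately have "\<exists>g. \<forall>i. (g (Suc i), g i) \<in> {(x, y). x \<in> S \<and> y \<in> S \<and> mless y x}"
      by (intro exI[of _ "\<lambda>i. Rp (f i)"]) simp
    then show False using nf by blast
  qed
next
  assume aw: "awo (Ab ` S)"
  show "anti_wo_m S" unfolding anti_wo_m_def wf_iff_no_infinite_down_chain
  proof
    assume "\<exists>f. \<forall>i. (f (Suc i), f i) \<in> {(x, y). x \<in> S \<and> y \<in> S \<and> mless y x}"
    then obtain f where f: "\<forall>i. f i \<in> S \<and> mless (f i) (f (Suc i))" by blast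
    have "\<forall>i. Ab (f i) \<in> Ab ` S" using f by blast
    moreover have "\<forall>i. Ab (f i) < Ab (f (Suc i))" using f assms mless_hm by blast
    ultimately have "\<exists>g. (\<forall>i. g i \<in> Ab ` S) \<and> (\<forall>i. g i < g (Suc i))"
      by (intro exI[of _ "\<lambda>i. Ab (f i)"]) simp
    then show False using aw unfolding awo_def by blast
  qed
qed

lemma ser_awo: "ser a \<Longrightarrow> awo (supp (tr a))"
  unfolding ser_def using supp_tr anti_wo_m_awo by metis

lemma is_series_ser: "good_group G \<Longrightarrow> is_series G a \<Longrightarrow> ser a"
  unfolding good_group_def is_series_def ser_def by blast

lemma supp_tr_ne: "Supp a \<subseteq> Hgrp \<Longrightarrow> a \<noteq> szero \<Longrightarrow> supp (tr a) \<noteq> {}"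
  using supp_tr[of a] unfolding Supp_def szero_def by (auto simp: fun_eq_iff)

lemma tr_eq: "Supp c \<subseteq> Hgrp \<Longrightarrow> Supp d \<subseteq> Hgrp \<Longrightarrow> tr c = tr d \<Longrightarrow> c = d"
proof (rule ext)
  fix g assume H: "Supp c \<subseteq> Hgrp" "Supp d \<subseteq> Hgrp" "tr c = tr d"
  show "c g = d g"
  proof (cases "g \<in> Hgrp")
    case True
    then show ?thesis using fun_cong[OF H(3), of "Ab g"] unfolding tr_def by (simp add: Ab_inv)
  next
    case False
    then have "c g = 0" "d g = 0" using H unfolding Supp_def by auto
    then show ?thesis by simp
  qed
qed

lemma stimes_tr:
  assumes "Supp c \<subseteq> Hgrp" "Supp a \<subseteq> Hgrp"
  shows "stimes c a g = (if g \<in> Hgrp then hmul (tr c) (tr a) (Ab g) else 0)"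
proof (cases "g \<in> Hgrp")
  case True
  let ?A = "{(x, y). c x \<noteq> 0 \<and> a y \<noteq> 0 \<and> gmul x y = g}"
  let ?B = "{(u, v). tr c u \<noteq> 0 \<and> tr a v \<noteq> 0 \<and> u + v = Ab g}"
  have e: "?A = map_prod Rp Rp ` ?B"
  proof (intro equalityI subsetI)
    fix p assume "p \<in> ?A"
    then obtain x y where p: "p = (x, y)" "c x \<noteq> 0" "a y \<noteq> 0" "gmul x y = g" by blast
    then have xy: "x \<in> Hgrp" "y \<in> Hgrp" using assms unfolding Supp_def by auto
    have "(Ab x, Ab y) \<in> ?B" using p xy unfolding tr_def by (auto simp: Ab_inv Ab_plus[symmetric])
    moreover have "p = map_prod Rp Rp (Ab x, Ab y)" using p xy by (simp add: Ab_inv)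
    ultimately show "p \<in> map_prod Rp Rp ` ?B" by blast
  next
    fix p assume "p \<in> map_prod Rp Rp ` ?B"
    then obtain u v where uv: "p = (Rp u, Rp v)" "tr c u \<noteq> 0" "tr a v \<noteq> 0" "u + v = Ab g" by auto
    have "gmul (Rp u) (Rp v) = g" using uv(4) Rep_plus[of u v] True by (simp add: Ab_inv)
    then show "p \<in> ?A" using uv unfolding tr_def by simp
  qed
  have i: "inj_on (map_prod Rp Rp) ?B" by (rule inj_on_subset[OF map_prod_inj_on]) (auto simp: inj_on_def Rep_hm_inject)
  have "stimes c a g = (\<Sum>(x, y)\<in>?A. c x * a y)" unfolding stimes_def ..
  also have "\<dots> = (\<Sum>(u, v)\<in>?B. tr c u * tr a v)" unfolding e sum.reindex[OF i]
    by (simp add: comp_def tr_def case_prod_beta)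
  finally show ?thesis using True unfolding hmul_def by simp
next
  case False
  have e: "{(x, y). c x \<noteq> 0 \<and> a y \<noteq> 0 \<and> gmul x y = g} = {}"
    using assms False Hgrp_gmul unfolding Supp_def by blast
  show ?thesis using False unfolding stimes_def by (simp only: e sum.empty if_False)
qed


lemma GH: "good_group G \<Longrightarrow> G \<subseteq> Hgrp"
  unfolding good_group_def by blast

lemma sdiv_prop:
  assumes gG: "good_group G" and a: "is_series G a" "a \<noteq> szero" and b: "is_series G b"
  shows "is_series G (sdiv G b a) \<and> stimes (sdiv G b a) a = b"
proof -
  have GH: "G \<subseteq> Hgrp" using GH[OF gG] .
  have G: "gone \<in> G" "\<forall>g\<in>G. \<forall>h\<in>G. gmul g h \<in> G" "\<forall>g\<in>G. ginv g \<in> G"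
    using gG unfolding good_group_def by blast+
  define H where "H = Ab ` G"
  have H0: "0 \<in> H" unfolding H_def using G(1) Ab_zero by force
  have Hp: "\<forall>x\<in>H. \<forall>y\<in>H. x + y \<in> H"
  proof (intro ballI)
    fix u v assume "u \<in> H" "v \<in> H"
    then obtain x y where "x \<in> G" "y \<in> G" "u = Ab x" "v = Ab y" unfolding H_def by blast
    moreover have "x \<in> Hgrp" "y \<in> Hgrp" using \<open>x \<in> G\<close> \<open>y \<in> G\<close> GH by blast+
    ultimately have "u + v = Ab (gmul x y)" using Ab_plus[of x y] by simp
    moreover have "gmul x y \<in> G" using G(2) \<open>x \<in> G\<close> \<open>y \<in> G\<close> by blast
    ultimately show "u + v \<in> H" unfolding H_def by blast
  qed
  have Hn: "\<forall>x\<in>H. - x \<in> H"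
  proof
    fix u assume "u \<in> H"
    then obtain x where "x \<in> G" "u = Ab x" unfolding H_def by blast
    moreover have "x \<in> Hgrp" using \<open>x \<in> G\<close> GH by blast
    ultimately have "- u = Ab (ginv x)" using Ab_uminus[of x] by simp
    moreover have "ginv x \<in> G" using G(3) \<open>x \<in> G\<close> by blast
    ultimately show "- u \<in> H" unfolding H_def by blast
  qed
  have aS: "Supp a \<subseteq> G" "ser a" using a(1) gG is_series_ser unfolding is_series_def by blast+
  have bS: "Supp b \<subseteq> G" "ser b" using b gG is_series_ser unfolding is_series_def by blast+
  have aH: "Supp a \<subseteq> Hgrp" using aS GH by blast
  have bH: "Supp b \<subseteq> Hgrp" using bS GH by blast
  have sa: "supp (tr a) \<subseteq> H" unfolding supp_tr[OF aH] H_def using aS(1) by blast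
  have sb: "supp (tr b) \<subseteq> H" unfolding supp_tr[OF bH] H_def using bS(1) by blast
  have aw: "awo (supp (tr a))" by (rule ser_awo[OF aS(2)])
  have bw: "awo (supp (tr b))" by (rule ser_awo[OF bS(2)])
  have ane: "supp (tr a) \<noteq> {}" by (rule supp_tr_ne[OF aH a(2)])
  obtain c' where c': "supp c' \<subseteq> H" "awo (supp c')" "hmul c' (tr a) = tr b"
    using hdiv_exists[OF H0 Hp Hn sa aw ane sb bw] by blast
  define c where "c g = (if g \<in> Hgrp then c' (Ab g) else 0)" for g
  have trc: "tr c = c'" unfolding tr_def c_def by (simp add: Rep_hm Rep_hm_inverse)
  have cG: "Supp c \<subseteq> G"
  proof
    fix g assume "g \<in> Supp c"
    then have g: "g \<in> Hgrp" "c' (Ab g) \<noteq> 0" unfolding Supp_def c_def by (auto split: if_splits)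
    then have "Ab g \<in> H" using c'(1) unfolding supp_def by blast
    then obtain x where "x \<in> G" "Ab g = Ab x" unfolding H_def by blast
    moreover have "x \<in> Hgrp" using \<open>x \<in> G\<close> GH by blast
    ultimately show "g \<in> G" using g(1) Ab_inj[of g x] by simp
  qed
  have cH: "Supp c \<subseteq> Hgrp" using cG GH by blast
  have "awo (Ab ` Supp c)" using c'(2) supp_tr[OF cH] trc by simp
  then have "anti_wo_m (Supp c)" using anti_wo_m_awo[OF cH] by simp
  then have cser: "is_series G c" unfolding is_series_def using cG by simp
  have st: "stimes d a g = (if g \<in> Hgrp then hmul (tr d) (tr a) (Ab g) else 0)" if "Supp d \<subseteq> Hgrp" for d g
    by (rule stimes_tr[OF that aH])
  have prod: "stimes c a = b"
  proof
    fix g show "stimes c a g = b g"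
    proof (cases "g \<in> Hgrp")
      case True
      have "stimes c a g = hmul c' (tr a) (Ab g)" using st[OF cH, of g] True trc by simp
      also have "\<dots> = tr b (Ab g)" using c'(3) by simp
      also have "\<dots> = b g" unfolding tr_def using Ab_inv[OF True] by simp
      finally show ?thesis .
    next
      case False
      then have "b g = 0" using bH unfolding Supp_def by blast
      moreover have "stimes c a g = 0" using st[OF cH, of g] False by simp
      ultimately show ?thesis by simp
    qed
  qed
  have uniq: "c2 = c" if c2: "is_series G c2 \<and> stimes c2 a = b" for c2
  proof -
    have c2H: "Supp c2 \<subseteq> Hgrp" using c2 GH unfolding is_series_def by blast
    have c2s: "ser c2" using is_series_ser[OF gG] c2 by blast
    have "hmul (tr c2) (tr a) = tr b"
    proof
      fix u
      have "stimes c2 a (Rp u) = hmul (tr c2) (tr a) (Ab (Rp u))"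
        using st[OF c2H, of "Rp u"] Rep_hm[of u] by simp
      then show "hmul (tr c2) (tr a) u = tr b u" using c2 unfolding tr_def by (simp add: Rep_hm_inverse)
    qed
    then have "hmul (tr c2) (tr a) = hmul (tr c) (tr a)" using c'(3) trc by simp
    then have "tr c2 = tr c" using hmul_unique[OF aw ane ser_awo[OF c2s]] c'(2) trc by simp
    then show ?thesis using tr_eq c2H cH by blast
  qed
  have "sdiv G b a = c" unfolding sdiv_def
  proof (rule the_equality)
    show "is_series G c \<and> stimes c a = b" using cser prod by simp
  next
    fix c2 assume "is_series G c2 \<and> stimes c2 a = b" then show "c2 = c" by (rule uniq)
  qed
  then show ?thesis using cser prod by simp
qed

lemma mle_antisym: "x \<in> Hgrp \<Longrightarrow> y \<in> Hgrp \<Longrightarrow> mle x y \<Longrightarrow> mle y x \<Longrightarrow> x = y"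
  by (simp add: mle_hm Ab_inj)

lemma LM_char:
  assumes "Supp a \<subseteq> Hgrp" "m \<in> Supp a" "\<forall>h\<in>Supp a. mle h m"
  shows "LM a = m"
  unfolding LM_def
proof (rule the_equality)
  show "m \<in> Supp a \<and> (\<forall>h\<in>Supp a. mle h m)" using assms by blast
next
  fix m' assume "m' \<in> Supp a \<and> (\<forall>h\<in>Supp a. mle h m')"
  then show "m' = m" using assms mle_antisym by blast
qed

lemma LM_ex:
  assumes "ser a" "a \<noteq> szero"
  shows "LM a \<in> Supp a \<and> (\<forall>h\<in>Supp a. mle h (LM a))"
proof -
  have aH: "Supp a \<subseteq> Hgrp" using assms(1) unfolding ser_def by blast
  obtain u where u: "u \<in> supp (tr a)" "\<forall>v\<in>supp (tr a). v \<le> u"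
    using awo_max[OF ser_awo[OF assms(1)] _ supp_tr_ne[OF aH assms(2)]] by blast
  obtain x where x: "x \<in> Supp a" "u = Ab x" using u(1) supp_tr[OF aH] by blast
  have "\<forall>h\<in>Supp a. mle h x"
  proof
    fix h assume "h \<in> Supp a"
    then have "Ab h \<le> u" using u(2) supp_tr[OF aH] by blast
    then show "mle h x" using x aH \<open>h \<in> Supp a\<close> mle_hm by blast
  qed
  then have "LM a = x" using LM_char[OF aH x(1)] by blast
  then show ?thesis using x \<open>\<forall>h\<in>Supp a. mle h x\<close> by simp
qed

lemma stimes_lead:
  assumes "ser c" "ser a" "c \<noteq> szero" "a \<noteq> szero"
  shows "stimes c a (gmul (LM c) (LM a)) = c (LM c) * a (LM a)"
proof -
  have cH: "Supp c \<subseteq> Hgrp" and aH: "Supp a \<subseteq> Hgrp" using assms unfolding ser_def by blast+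
  note lc = LM_ex[OF assms(1,3)] and la = LM_ex[OF assms(2,4)]
  have mH: "LM c \<in> Hgrp" "LM a \<in> Hgrp" using lc la cH aH by blast+
  have bnd: "\<forall>x\<in>supp (tr d). x \<le> Ab (LM d)"
    if dH: "Supp d \<subseteq> Hgrp" and ld: "\<forall>h\<in>Supp d. mle h (LM d)" and mdH: "LM d \<in> Hgrp" for d
  proof
    fix u assume "u \<in> supp (tr d)"
    then obtain h where h: "h \<in> Supp d" "u = Ab h" using supp_tr[OF dH] by blast
    then have "mle h (LM d)" using ld by blast
    moreover have "h \<in> Hgrp" using h(1) dH by blast
    ultimately show "u \<le> Ab (LM d)" using mle_hm[OF \<open>h \<in> Hgrp\<close> mdH] h(2) by simp
  qed
  have inn: "Ab (LM d) \<in> supp (tr d)" if dH: "Supp d \<subseteq> Hgrp" and ld: "LM d \<in> Supp d" for d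
    using supp_tr[OF dH] ld by blast
  have g1: "Ab (LM c) \<in> supp (tr c)" "\<forall>x\<in>supp (tr c). x \<le> Ab (LM c)"
    using inn[OF cH] bnd[OF cH] lc mH by blast+
  have g2: "Ab (LM a) \<in> supp (tr a)" "\<forall>x\<in>supp (tr a). x \<le> Ab (LM a)"
    using inn[OF aH] bnd[OF aH] la mH by blast+
  have "stimes c a (gmul (LM c) (LM a)) = hmul (tr c) (tr a) (Ab (LM c) + Ab (LM a))"
    using stimes_tr[OF cH aH] Hgrp_gmul[OF mH] Ab_plus[OF mH] by simp
  also have "\<dots> = tr c (Ab (LM c)) * tr a (Ab (LM a))" by (rule hmul_lead[OF g1 g2])
  finally show ?thesis unfolding tr_def using mH by (simp add: Ab_inv)
qed

lemma stimes_szero: "stimes szero a = szero"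
  unfolding stimes_def szero_def by simp

lemma stimes_mono: "stimes (mono \<beta>) s g = s (gmul g (ginv \<beta>))"
proof -
  let ?y = "gmul g (ginv \<beta>)"
  have k: "gmul \<beta> y = g \<longleftrightarrow> y = ?y" for y
    unfolding gmul_def ginv_def by (auto simp: fun_eq_iff algebra_simps)
  show ?thesis
  proof (cases "s ?y = 0")
    case True
    have e: "{(x, y). mono \<beta> x \<noteq> 0 \<and> s y \<noteq> 0 \<and> gmul x y = g} = {}"
    proof (intro equalityI subsetI)
      fix p assume "p \<in> {(x, y). mono \<beta> x \<noteq> 0 \<and> s y \<noteq> 0 \<and> gmul x y = g}"
      then obtain x y where p: "p = (x, y)" "mono \<beta> x \<noteq> 0" "s y \<noteq> 0" "gmul x y = g" by blast
      then have "x = \<beta>" unfolding mono_def by (simp split: if_splits)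
      then have "y = ?y" using p(4) k by blast
      then show "p \<in> {}" using p(3) True by simp
    qed simp
    show ?thesis unfolding stimes_def by (simp only: e sum.empty True)
  next
    case False
    have e: "{(x, y). mono \<beta> x \<noteq> 0 \<and> s y \<noteq> 0 \<and> gmul x y = g} = {(\<beta>, ?y)}"
    proof (intro equalityI subsetI)
      fix p assume "p \<in> {(x, y). mono \<beta> x \<noteq> 0 \<and> s y \<noteq> 0 \<and> gmul x y = g}"
      then obtain x y where p: "p = (x, y)" "mono \<beta> x \<noteq> 0" "s y \<noteq> 0" "gmul x y = g" by blast
      then have "x = \<beta>" unfolding mono_def by (simp split: if_splits)
      then have "y = ?y" using p(4) k by blast
      then show "p \<in> {(\<beta>, ?y)}" using p(1) \<open>x = \<beta>\<close> by simp
    next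
      fix p assume "p \<in> {(\<beta>, ?y)}"
      then have "p = (\<beta>, ?y)" by simp
      moreover have "gmul \<beta> ?y = g" using k by blast
      ultimately show "p \<in> {(x, y). mono \<beta> x \<noteq> 0 \<and> s y \<noteq> 0 \<and> gmul x y = g}"
        using False unfolding mono_def by simp
    qed
    have "stimes (mono \<beta>) s g = mono \<beta> \<beta> * s ?y" unfolding stimes_def e by simp
    then show ?thesis unfolding mono_def by simp
  qed
qed

lemma Supp_mono: "Supp (mono g) = {g}"
  unfolding Supp_def mono_def by auto

lemma ser_mono: "g \<in> Hgrp \<Longrightarrow> ser (mono g)"
  unfolding ser_def Supp_mono using anti_wo_m_awo[of "{g}"] awo_single by auto

lemma is_series_mono: "good_group G \<Longrightarrow> g \<in> G \<Longrightarrow> is_series G (mono g)"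
  using ser_mono GH unfolding is_series_def ser_def Supp_mono by blast

lemma mono_nz: "mono g \<noteq> szero"
  unfolding mono_def szero_def by (auto simp: fun_eq_iff)

lemma LM_mono: "g \<in> Hgrp \<Longrightarrow> LM (mono g) = g"
  by (rule LM_char) (auto simp: Supp_mono mle_def)

lemma mono_not_const: "\<beta> \<noteq> gone \<Longrightarrow> mono \<beta> \<noteq> smul c (mono gone)"
proof
  assume "\<beta> \<noteq> gone" "mono \<beta> = smul c (mono gone)"
  then have "mono \<beta> \<beta> = smul c (mono gone) \<beta>" by simp
  then show False using \<open>\<beta> \<noteq> gone\<close> unfolding mono_def smul_def by simp
qed

lemma LFm_char: "u p \<noteq> 0 \<Longrightarrow> \<forall>q>p. u q = 0 \<Longrightarrow> LFm u = p"
  unfolding LFm_def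
proof (rule the_equality)
  fix p' assume H: "u p \<noteq> 0" "\<forall>q>p. u q = 0" "u p' \<noteq> 0 \<and> (\<forall>q>p'. u q = 0)"
  show "p' = p"
  proof (rule ccontr)
    assume "p' \<noteq> p"
    then have "p < p' \<or> p' < p" by auto
    then show False using H by auto
  qed
qed auto

lemma LFm_Hgrp:
  assumes "u \<in> Hgrp" "u \<noteq> gone"
  shows "u (LFm u) \<noteq> 0 \<and> (\<forall>q>LFm u. u q = 0)"
proof -
  obtain p where "u p \<noteq> 0" "\<forall>q>p. u q = 0" using Hgrp_max[OF assms] by blast
  moreover have "LFm u = p" using LFm_char \<open>u p \<noteq> 0\<close> \<open>\<forall>q>p. u q = 0\<close> by blast
  ultimately show ?thesis by simp
qed


lemma gmul_ginv_gone: "gmul x (ginv gone) = x"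
  unfolding gmul_def ginv_def gone_def by simp

lemma mless_gone_gpos: "mless gone x \<longleftrightarrow> gpos x"
  unfolding mless_def gmul_ginv_gone ..

lemma gpos_LFm:
  assumes "gpos u" shows "u (LFm u) > 0"
proof -
  obtain p where "u p > 0" "\<forall>q>p. u q = 0" using assms unfolding gpos_def by blast
  moreover then have "LFm u = p" using LFm_char[of u p] by simp
  ultimately show ?thesis by simp
qed

lemma mabs_props:
  assumes "u \<in> Hgrp" "u \<noteq> gone"
  shows "mabs u (LFm u) = \<bar>u (LFm u)\<bar> \<and> (\<forall>q>LFm u. mabs u q = 0) \<and> mless gone (mabs u)"
proof -
  have L: "u (LFm u) \<noteq> 0" "\<forall>q>LFm u. u q = 0" using LFm_Hgrp[OF assms] by blast+
  have A: "mabs u (LFm u) = \<bar>u (LFm u)\<bar> \<and> (\<forall>q>LFm u. mabs u q = 0)"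
  proof (cases "gpos u")
    case True
    then have "u (LFm u) > 0" by (rule gpos_LFm)
    then show ?thesis using True L unfolding mabs_def mless_gone_gpos by simp
  next
    case False
    have "\<not> u (LFm u) > 0"
    proof
      assume "u (LFm u) > 0" then have "gpos u" using L unfolding gpos_def by blast
      then show False using False by simp
    qed
    then have "u (LFm u) < 0" using L by simp
    then show ?thesis using False L unfolding mabs_def mless_gone_gpos ginv_def by simp
  qed
  have "gpos (mabs u)" unfolding gpos_def using A L by (intro exI[of _ "LFm u"]) simp
  then show ?thesis using A by (simp add: mless_gone_gpos)
qed

lemma ind_G: "good_group G \<Longrightarrow> ind p \<in> G"
  unfolding good_group_def by blast

lemma nind_G:
  assumes "good_group G"
  shows "(\<lambda>x. real n * ind p x) \<in> G"
proof (induction n)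
  case 0
  have "(\<lambda>x. real 0 * ind p x) = gone" unfolding gone_def by simp
  then show ?case using assms unfolding good_group_def by simp
next
  case (Suc n)
  have "(\<lambda>x. real (Suc n) * ind p x) = gmul (\<lambda>x. real n * ind p x) (ind p)"
    unfolding gmul_def by (simp add: algebra_simps)
  then show ?case using Suc assms unfolding good_group_def by simp
qed

lemma ind_ne: "ind p \<noteq> gone"
proof
  assume "ind p = gone" then have "ind p p = gone p" by simp
  then show False unfolding ind_def gone_def by simp
qed

lemma LFm_nind: "r \<noteq> 0 \<Longrightarrow> LFm (\<lambda>x. r * ind p x) = p"
  by (rule LFm_char) (auto simp: ind_def)

lemma LFm_ind: "LFm (ind p) = p"
  by (rule LFm_char) (auto simp: ind_def)

lemma gpos_ind: "gpos (ind p)"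
  unfolding gpos_def ind_def by (intro exI[of _ p]) auto

lemma mabs_pos: "mless gone u \<Longrightarrow> mabs u = u"
  unfolding mabs_def by simp

context
  fixes G :: "('p::linorder) mon set" and D :: "'p series \<Rightarrow> 'p series"
  assumes gG: "good_group G" and hD: "hardy_type G D"
begin

lemma GH': "G \<subseteq> Hgrp"
  using GH[OF gG] .

lemma hd_parts1: "series_derivation G D"
  using hD unfolding hardy_type_def by (rule conjunct1)

lemma hd_parts2: "\<forall>a. is_series G a \<longrightarrow> (D a = szero \<longleftrightarrow> (\<exists>c. a = smul c (mono gone)))"
  using hD unfolding hardy_type_def by (rule conjunct1[OF conjunct2])

lemma hd_parts3: "\<forall>a b. is_series G a \<and> is_series G b \<and> a \<noteq> szero \<and> b \<noteq> szero
        \<and> LM a \<noteq> gone \<and> LM b \<noteq> gone \<longrightarrow> (mle (LM a) (LM b) \<longleftrightarrow> mle (LM (D a)) (LM (D b)))"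
  using hD unfolding hardy_type_def by (rule conjunct1[OF conjunct2[OF conjunct2]])

lemma hd_parts4: "\<forall>a b. is_series G a \<and> is_series G b \<and> a \<noteq> szero \<and> b \<noteq> szero
        \<and> mless (mabs (LM b)) (mabs (LM a)) \<and> mless gone (mabs (LM b)) \<longrightarrow>
          mle (LM (sdiv G (D b) b)) (LM (sdiv G (D a) a))
          \<and> (LM (sdiv G (D a) a) = LM (sdiv G (D b) b) \<longleftrightarrow> LF a = LF b)"
  using hD unfolding hardy_type_def by (rule conjunct2[OF conjunct2[OF conjunct2]])

lemma sd_parts1: "\<forall>a. is_series G a \<longrightarrow> is_series G (D a)"
  using hd_parts1 unfolding series_derivation_def by (rule conjunct1)

lemma sd_parts2: "D (mono gone) = szero"
  using hd_parts1 unfolding series_derivation_def by (rule conjunct1[OF conjunct2])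

lemma sd_parts3: "\<forall>al\<in>G. let f = (\<lambda>p. smul (al p) (sdiv G (D (mono (ind p))) (mono (ind p)))) in
        fsummable (gsupp al) f \<and> D (mono al) = stimes (mono al) (fsum (gsupp al) f)"
  using hd_parts1 unfolding series_derivation_def by (rule conjunct1[OF conjunct2[OF conjunct2]])

lemma sd_parts4: "\<forall>a. is_series G a \<longrightarrow>
        (let f = (\<lambda>al. smul (a al) (D (mono al))) in
          fsummable (Supp a) f \<and> D a = fsum (Supp a) f)"
  using hd_parts1 unfolding series_derivation_def by (rule conjunct2[OF conjunct2[OF conjunct2]])

lemma Dser: "is_series G a \<Longrightarrow> is_series G (D a)"
  using sd_parts1 by blast

lemma D1: "D (mono gone) = szero"
  by (rule sd_parts2)

lemma Dmon: "al \<in> G \<Longrightarrow> D (mono al) = stimes (mono al) (fsum (gsupp al) (\<lambda>p. smul (al p) (sdiv G (D (mono (ind p))) (mono (ind p)))))"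
proof -
  assume "al \<in> G"
  from bspec[OF sd_parts3 this] show ?thesis unfolding Let_def by (rule conjunct2)
qed

lemma Dsum: "is_series G a \<Longrightarrow> D a = fsum (Supp a) (\<lambda>al. smul (a al) (D (mono al)))"
proof -
  assume "is_series G a"
  from sd_parts4[rule_format, OF this] show ?thesis unfolding Let_def by (rule conjunct2)
qed

lemma HD1: "is_series G a \<Longrightarrow> D a = szero \<Longrightarrow> \<exists>c. a = smul c (mono gone)"
  using hd_parts2 by blast

lemma HD2: "is_series G a \<Longrightarrow> is_series G b \<Longrightarrow> a \<noteq> szero \<Longrightarrow> b \<noteq> szero \<Longrightarrow> LM a \<noteq> gone \<Longrightarrow> LM b \<noteq> gone
  \<Longrightarrow> mle (LM a) (LM b) \<longleftrightarrow> mle (LM (D a)) (LM (D b))"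
  using hd_parts3 by blast

lemma HD3: "is_series G a \<Longrightarrow> is_series G b \<Longrightarrow> a \<noteq> szero \<Longrightarrow> b \<noteq> szero
  \<Longrightarrow> mless (mabs (LM b)) (mabs (LM a)) \<Longrightarrow> mless gone (mabs (LM b)) \<Longrightarrow>
   mle (LM (sdiv G (D b) b)) (LM (sdiv G (D a) a))
          \<and> (LM (sdiv G (D a) a) = LM (sdiv G (D b) b) \<longleftrightarrow> LF a = LF b)"
  using hd_parts4 by blast

lemma Dmono_nz: "\<beta> \<in> G \<Longrightarrow> \<beta> \<noteq> gone \<Longrightarrow> D (mono \<beta>) \<noteq> szero"
  using HD1[OF is_series_mono[OF gG]] mono_not_const by blast

lemma quot:
  assumes "is_series G b" "b \<noteq> szero"
  shows "is_series G (sdiv G (D b) b) \<and> stimes (sdiv G (D b) b) b = D b"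
  using sdiv_prop[OF gG assms Dser[OF assms(1)]] .

lemma quot_nz:
  assumes "is_series G b" "b \<noteq> szero" "LM b \<noteq> gone"
  shows "sdiv G (D b) b \<noteq> szero"
proof
  assume "sdiv G (D b) b = szero"
  then have "D b = szero" using quot[OF assms(1,2)] stimes_szero by metis
  then obtain c where c: "b = smul c (mono gone)" using HD1[OF assms(1)] by blast
  have "Supp b \<subseteq> {gone}" unfolding c Supp_def smul_def mono_def by auto
  moreover have "LM b \<in> Supp b" using LM_ex[OF is_series_ser[OF gG assms(1)] assms(2)] by blast
  ultimately show False using assms(3) by blast
qed

abbreviation qq :: "'p \<Rightarrow> 'p series" where
  "qq p \<equiv> sdiv G (D (mono (ind p))) (mono (ind p))"

lemma qq_props: "is_series G (qq p) \<and> qq p \<noteq> szero \<and> LM (qq p) = theta G D p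
  \<and> LM (qq p) \<in> Supp (qq p) \<and> (\<forall>h\<in>Supp (qq p). mle h (LM (qq p)))"
proof -
  have ms: "is_series G (mono (ind p))" using is_series_mono[OF gG ind_G[OF gG]] .
  have LMi: "LM (mono (ind p)) = ind p" using LM_mono Hgrp_ind by blast
  have s: "is_series G (qq p)" using quot[OF ms mono_nz] by blast
  have nz: "qq p \<noteq> szero" using quot_nz[OF ms mono_nz] LMi by (simp add: ind_ne)
  show ?thesis using s nz LM_ex[OF is_series_ser[OF gG s] nz] unfolding theta_def by simp
qed

lemma theta_H: "theta G D p \<in> Hgrp"
  using qq_props[of p] GH' unfolding is_series_def by auto

lemma theta_strict:
  assumes "\<psi> < \<phi>"
  shows "mless (theta G D \<psi>) (theta G D \<phi>)"
proof -
  have ms: "is_series G (mono (ind p))" for p using is_series_mono[OF gG ind_G[OF gG]] .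
  have LMi: "LM (mono (ind p)) = ind p" for p using LM_mono Hgrp_ind by blast
  have mi: "mabs (ind p) = ind p" for p using mabs_pos gpos_ind mless_gone_gpos by metis
  have l1: "mless (ind \<psi>) (ind \<phi>)" unfolding mless_def gpos_def
    using assms by (intro exI[of _ \<phi>]) (auto simp: gmul_def ginv_def ind_def)
  have l2: "mless gone (ind \<psi>)" using gpos_ind mless_gone_gpos by blast
  have h: "mle (LM (qq \<psi>)) (LM (qq \<phi>)) \<and> (LM (qq \<phi>) = LM (qq \<psi>) \<longleftrightarrow> LF (mono (ind \<phi>)) = LF (mono (ind \<psi>)))"
    by (rule HD3[OF ms ms mono_nz mono_nz]) (simp_all add: LMi mi l1 l2)
  have LFi: "LF (mono (ind p)) = p" for p unfolding LF_def LMi LFm_ind ..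
  have "LF (mono (ind \<phi>)) \<noteq> LF (mono (ind \<psi>))" unfolding LFi[of \<phi>] LFi[of \<psi>] using assms by simp
  then have "LM (qq \<phi>) \<noteq> LM (qq \<psi>)" using h by simp
  then show ?thesis using h unfolding theta_def mle_def by auto
qed

lemma K1:
  assumes bS: "is_series G b" and bnz: "b \<noteq> szero" and bLM: "LM b \<noteq> gone"
  shows "LM (sdiv G (D b) b) = theta G D (LF b)"
proof -
  define \<beta> where "\<beta> = LM b"
  define \<phi> where "\<phi> = LF b"
  have \<phi>: "\<phi> = LFm \<beta>" unfolding \<phi>_def \<beta>_def LF_def ..
  have \<beta>H: "\<beta> \<in> Hgrp" using LM_ex[OF is_series_ser[OF gG bS] bnz] bS GH' unfolding \<beta>_def is_series_def by blast
  have \<beta>ne: "\<beta> \<noteq> gone" using bLM unfolding \<beta>_def .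
  note ma = mabs_props[OF \<beta>H \<beta>ne]
  define e where "e = \<beta> \<phi>"
  define n :: nat where "n = nat \<lceil>\<bar>e\<bar>\<rceil> + 2"
  have nbig: "real n > \<bar>e\<bar>" "real n > 1" unfolding n_def by linarith+
  define w where "w = (\<lambda>x. real n * ind \<phi> x)"
  have wG: "w \<in> G" unfolding w_def by (rule nind_G[OF gG])
  have wH: "w \<in> Hgrp" using wG GH' by blast
  have LMw: "LM (mono w) = w" using LM_mono[OF wH] .
  have ws: "is_series G (mono w)" using is_series_mono[OF gG wG] .
  have wpos: "mless gone w" unfolding mless_gone_gpos gpos_def w_def
    using nbig by (intro exI[of _ \<phi>]) (auto simp: ind_def)
  have mw: "mabs w = w" using mabs_pos[OF wpos] .
  have LFw: "LF (mono w) = \<phi>" unfolding LF_def LMw using nbig by (simp add: w_def LFm_nind)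
  have c1: "mless (mabs (LM b)) (mabs (LM (mono w)))"
    unfolding LMw mw mless_def gpos_def \<beta>_def[symmetric]
    using ma nbig \<phi> unfolding e_def
    by (intro exI[of _ \<phi>]) (auto simp: gmul_def ginv_def w_def ind_def)
  have c2: "mless gone (mabs (LM b))" using ma \<beta>_def by simp
  have h1: "LM (sdiv G (D (mono w)) (mono w)) = LM (sdiv G (D b) b)"
    using HD3[OF ws bS mono_nz bnz c1 c2] LFw \<phi>_def by simp
  have ms: "is_series G (mono (ind \<phi>))" using is_series_mono[OF gG ind_G[OF gG]] .
  have LMi: "LM (mono (ind \<phi>)) = ind \<phi>" using LM_mono Hgrp_ind by blast
  have mi: "mabs (ind \<phi>) = ind \<phi>" using mabs_pos gpos_ind mless_gone_gpos by metis
  have c3: "mless (mabs (LM (mono (ind \<phi>)))) (mabs (LM (mono w)))"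
    unfolding LMw mw LMi mi mless_def gpos_def
    using nbig by (intro exI[of _ \<phi>]) (auto simp: gmul_def ginv_def w_def ind_def)
  have c4: "mless gone (mabs (LM (mono (ind \<phi>))))" unfolding LMi mi mless_gone_gpos by (rule gpos_ind)
  have LFi: "LF (mono (ind \<phi>)) = \<phi>" unfolding LF_def LMi LFm_ind ..
  have h2: "LM (sdiv G (D (mono w)) (mono w)) = LM (qq \<phi>)"
    using HD3[OF ws ms mono_nz mono_nz c3 c4] LFw LFi by simp
  show ?thesis using h1 h2 unfolding theta_def \<phi>_def by simp
qed

end


context
  fixes G :: "('p::linorder) mon set" and D :: "'p series \<Rightarrow> 'p series"
  assumes gG: "good_group G" and hD: "hardy_type G D"
begin

lemma main_LC:
  assumes aS: "is_series G a" and anz: "a \<noteq> szero" and aLM: "LM a \<noteq> gone"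
  shows "LC (sdiv G (D a) a) = LE a * LC (sdiv G (D (mono (ind (LF a)))) (mono (ind (LF a))))"
proof -
  note GH = GH'[OF gG hD]
  define \<alpha> where "\<alpha> = LM a"
  have aser: "ser a" using is_series_ser[OF gG aS] .
  have la: "\<alpha> \<in> Supp a" "\<forall>h\<in>Supp a. mle h \<alpha>" using LM_ex[OF aser anz] unfolding \<alpha>_def by blast+
  have aG: "Supp a \<subseteq> G" using aS unfolding is_series_def by blast
  have \<alpha>G: "\<alpha> \<in> G" using la aG by blast
  have \<alpha>H: "\<alpha> \<in> Hgrp" using \<alpha>G GH by blast
  have \<alpha>ne: "\<alpha> \<noteq> gone" using aLM unfolding \<alpha>_def .
  define \<phi> where "\<phi> = LFm \<alpha>"
  have \<phi>: "\<alpha> \<phi> \<noteq> 0" "\<forall>q>\<phi>. \<alpha> q = 0" using LFm_Hgrp[OF \<alpha>H \<alpha>ne] unfolding \<phi>_def by blast+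
  have LFa: "LF a = \<phi>" unfolding LF_def \<phi>_def \<alpha>_def ..
  have LEa: "LE a = \<alpha> \<phi>" unfolding LE_def LEm_def \<phi>_def \<alpha>_def ..
  define \<theta> where "\<theta> = theta G D \<phi>"
  have \<theta>H: "\<theta> \<in> Hgrp" unfolding \<theta>_def by (rule theta_H[OF gG hD])
  define q where "q = sdiv G (D a) a"
  have qS: "is_series G q" and prod: "stimes q a = D a" using quot[OF gG hD aS anz] unfolding q_def by blast+
  have qnz: "q \<noteq> szero" unfolding q_def by (rule quot_nz[OF gG hD aS anz aLM])
  have LMq: "LM q = \<theta>" unfolding q_def \<theta>_def LFa[symmetric] by (rule K1[OF gG hD aS anz aLM])
  have lead: "D a (gmul \<theta> \<alpha>) = q \<theta> * a \<alpha>"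
    using stimes_lead[OF is_series_ser[OF gG qS] aser qnz anz] prod LMq unfolding \<alpha>_def by simp
  define s where "s = fsum (gsupp \<alpha>) (\<lambda>p. smul (\<alpha> p) (qq G D p))"
  have D\<alpha>: "D (mono \<alpha>) g = s (gmul g (ginv \<alpha>))" for g
    using Dmon[OF gG hD \<alpha>G] stimes_mono unfolding s_def by simp
  define \<Lambda> where "\<Lambda> = gmul \<alpha> \<theta>"
  have \<Lambda>b: "gmul \<Lambda> (ginv \<alpha>) = \<theta>" unfolding \<Lambda>_def gmul_def ginv_def by (simp add: fun_eq_iff)
  have \<Lambda>c: "gmul \<theta> \<alpha> = \<Lambda>" unfolding \<Lambda>_def by (rule gmul_comm)
  have qp: "is_series G (qq G D p) \<and> qq G D p \<noteq> szero \<and> LM (qq G D p) = theta G D p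
    \<and> LM (qq G D p) \<in> Supp (qq G D p) \<and> (\<forall>h\<in>Supp (qq G D p). mle h (LM (qq G D p)))" for p
    by (rule qq_props[OF gG hD])
  have qqH: "Supp (qq G D p) \<subseteq> Hgrp" for p using qp[of p] GH unfolding is_series_def by blast
  have tH: "theta G D p \<in> Hgrp" for p by (rule theta_H[OF gG hD])
  have le\<phi>: "\<psi> \<le> \<phi>" if "\<psi> \<in> gsupp \<alpha>" for \<psi>
  proof (rule ccontr)
    assume "\<not> \<psi> \<le> \<phi>" then have "\<phi> < \<psi>" by simp
    then show False using \<phi>(2) that unfolding gsupp_def by auto
  qed
  have tle: "Ab (theta G D \<psi>) \<le> Ab \<theta>" if "\<psi> \<in> gsupp \<alpha>" for \<psi>
  proof (cases "\<psi> = \<phi>")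
    case True then show ?thesis unfolding \<theta>_def by simp
  next
    case False
    then have "\<psi> < \<phi>" using le\<phi>[OF that] by simp
    then have "mless (theta G D \<psi>) \<theta>" unfolding \<theta>_def by (rule theta_strict[OF gG hD])
    then show ?thesis using mless_hm[OF tH \<theta>H] by simp
  qed
  have qq0: "qq G D \<psi> \<theta> = 0" if "\<psi> \<in> gsupp \<alpha>" "\<psi> \<noteq> \<phi>" for \<psi>
  proof (rule ccontr)
    assume "qq G D \<psi> \<theta> \<noteq> 0"
    then have "\<theta> \<in> Supp (qq G D \<psi>)" unfolding Supp_def by simp
    then have "mle \<theta> (theta G D \<psi>)" using qp[of \<psi>] by auto
    then have "Ab \<theta> \<le> Ab (theta G D \<psi>)" using mle_hm[OF \<theta>H tH] by simp
    moreover have "\<psi> < \<phi>" using le\<phi>[OF that(1)] that(2) by simp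
    then have "mless (theta G D \<psi>) \<theta>" unfolding \<theta>_def by (rule theta_strict[OF gG hD])
    then have "Ab (theta G D \<psi>) < Ab \<theta>" using mless_hm[OF tH \<theta>H] by simp
    ultimately show False by simp
  qed
  have q\<phi>\<theta>: "qq G D \<phi> \<theta> \<noteq> 0" using qp[of \<phi>] unfolding \<theta>_def Supp_def by auto
  have s\<theta>: "s \<theta> = \<alpha> \<phi> * qq G D \<phi> \<theta>"
  proof -
    have e: "{\<psi> \<in> gsupp \<alpha>. smul (\<alpha> \<psi>) (qq G D \<psi>) \<theta> \<noteq> 0} = {\<phi>}"
    proof (intro equalityI subsetI)
      fix \<psi> assume "\<psi> \<in> {\<psi> \<in> gsupp \<alpha>. smul (\<alpha> \<psi>) (qq G D \<psi>) \<theta> \<noteq> 0}"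
      then have "\<psi> \<in> gsupp \<alpha>" "qq G D \<psi> \<theta> \<noteq> 0" unfolding smul_def by auto
      then show "\<psi> \<in> {\<phi>}" using qq0 by blast
    next
      fix \<psi> assume "\<psi> \<in> {\<phi>}"
      then show "\<psi> \<in> {\<psi> \<in> gsupp \<alpha>. smul (\<alpha> \<psi>) (qq G D \<psi>) \<theta> \<noteq> 0}"
        using \<phi>(1) q\<phi>\<theta> unfolding gsupp_def smul_def by simp
    qed
    show ?thesis unfolding s_def fsum_def e by (simp add: smul_def)
  qed
  have s_above: "s h = 0" if "Ab \<theta> < Ab h" "h \<in> Hgrp" for h
  proof -
    have e: "{\<psi> \<in> gsupp \<alpha>. smul (\<alpha> \<psi>) (qq G D \<psi>) h \<noteq> 0} = {}"
    proof (intro equalityI subsetI)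
      fix \<psi> assume "\<psi> \<in> {\<psi> \<in> gsupp \<alpha>. smul (\<alpha> \<psi>) (qq G D \<psi>) h \<noteq> 0}"
      then have \<psi>: "\<psi> \<in> gsupp \<alpha>" "qq G D \<psi> h \<noteq> 0" unfolding smul_def by auto
      then have "h \<in> Supp (qq G D \<psi>)" unfolding Supp_def by simp
      then have "mle h (theta G D \<psi>)" using qp[of \<psi>] by auto
      then have "Ab h \<le> Ab (theta G D \<psi>)" using mle_hm[OF that(2) tH] by simp
      then have "Ab h \<le> Ab \<theta>" using tle[OF \<psi>(1)] by simp
      then show "\<psi> \<in> {}" using that(1) by simp
    qed simp
    show ?thesis unfolding s_def fsum_def by (simp only: e sum.empty)
  qed
  have D\<alpha>S: "is_series G (D (mono \<alpha>))" by (rule Dser[OF gG hD is_series_mono[OF gG \<alpha>G]])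
  have D\<alpha>H: "Supp (D (mono \<alpha>)) \<subseteq> Hgrp" using D\<alpha>S GH unfolding is_series_def by blast
  have D\<alpha>\<Lambda>: "D (mono \<alpha>) \<Lambda> = \<alpha> \<phi> * qq G D \<phi> \<theta>" using D\<alpha>[of \<Lambda>] \<Lambda>b s\<theta> by simp
  have \<Lambda>H: "\<Lambda> \<in> Hgrp" unfolding \<Lambda>_def using Hgrp_gmul[OF \<alpha>H \<theta>H] .
  have LMD\<alpha>: "LM (D (mono \<alpha>)) = \<Lambda>"
  proof (rule LM_char[OF D\<alpha>H])
    show "\<Lambda> \<in> Supp (D (mono \<alpha>))" unfolding Supp_def using D\<alpha>\<Lambda> \<phi>(1) q\<phi>\<theta> by simp
    show "\<forall>h\<in>Supp (D (mono \<alpha>)). mle h \<Lambda>"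
    proof
      fix h assume h: "h \<in> Supp (D (mono \<alpha>))"
      then have hH: "h \<in> Hgrp" using D\<alpha>H by blast
      define h' where "h' = gmul h (ginv \<alpha>)"
      have h'H: "h' \<in> Hgrp" unfolding h'_def using Hgrp_gmul[OF hH Hgrp_ginv[OF \<alpha>H]] .
      have "s h' \<noteq> 0" using h D\<alpha>[of h] unfolding Supp_def h'_def by simp
      then have "\<not> Ab \<theta> < Ab h'" using s_above[OF _ h'H] by blast
      then have "Ab h' \<le> Ab \<theta>" by simp
      then have "Ab h' + Ab \<alpha> \<le> Ab \<theta> + Ab \<alpha>" by simp
      moreover have "h = gmul h' \<alpha>" unfolding h'_def gmul_def ginv_def by (simp add: fun_eq_iff)
      ultimately have "Ab h \<le> Ab \<theta> + Ab \<alpha>" using Ab_plus[OF h'H \<alpha>H] by simp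
      also have "Ab \<theta> + Ab \<alpha> = Ab \<Lambda>" unfolding \<Lambda>_def using Ab_plus[OF \<alpha>H \<theta>H] by (simp add: add.commute)
      finally show "mle h \<Lambda>" using mle_hm[OF hH \<Lambda>H] by simp
    qed
  qed
  have D\<beta>0: "D (mono \<beta>) \<Lambda> = 0" if \<beta>: "\<beta> \<in> Supp a" "\<beta> \<noteq> \<alpha>" for \<beta>
  proof (cases "\<beta> = gone")
    case True then show ?thesis using D1[OF gG hD] unfolding szero_def by simp
  next
    case False
    show ?thesis
    proof (cases "D (mono \<beta>) = szero")
      case True then show ?thesis unfolding szero_def by simp
    next
      case Dnz: False
      have \<beta>G: "\<beta> \<in> G" using \<beta>(1) aG by blast
      have \<beta>H: "\<beta> \<in> Hgrp" using \<beta>G GH by blast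
      have LMb: "LM (mono \<beta>) = \<beta>" using LM_mono[OF \<beta>H] .
      have LMa: "LM (mono \<alpha>) = \<alpha>" using LM_mono[OF \<alpha>H] .
      have h2: "mle \<alpha> \<beta> \<longleftrightarrow> mle (LM (D (mono \<alpha>))) (LM (D (mono \<beta>)))"
        using HD2[OF gG hD is_series_mono[OF gG \<alpha>G] is_series_mono[OF gG \<beta>G] mono_nz mono_nz]
        LMa LMb \<alpha>ne False by simp
      have "mle \<beta> \<alpha>" using la \<beta>(1) by blast
      then have "\<not> mle \<alpha> \<beta>" using mle_antisym[OF \<beta>H \<alpha>H] \<beta>(2) by blast
      then have nle: "\<not> mle \<Lambda> (LM (D (mono \<beta>)))" using h2 LMD\<alpha> by simp
      show ?thesis
      proof (rule ccontr)
        assume "D (mono \<beta>) \<Lambda> \<noteq> 0"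
        then have "\<Lambda> \<in> Supp (D (mono \<beta>))" unfolding Supp_def by simp
        moreover have "ser (D (mono \<beta>))" using is_series_ser[OF gG Dser[OF gG hD is_series_mono[OF gG \<beta>G]]] .
        ultimately have "mle \<Lambda> (LM (D (mono \<beta>)))" using LM_ex[OF _ Dnz] by blast
        then show False using nle by simp
      qed
    qed
  qed
  have Da\<Lambda>: "D a \<Lambda> = a \<alpha> * D (mono \<alpha>) \<Lambda>"
  proof -
    let ?S = "{\<beta> \<in> Supp a. smul (a \<beta>) (D (mono \<beta>)) \<Lambda> \<noteq> 0}"
    have S: "?S \<subseteq> {\<alpha>}"
    proof
      fix \<beta> assume "\<beta> \<in> ?S"
      then have "\<beta> \<in> Supp a" "a \<beta> * D (mono \<beta>) \<Lambda> \<noteq> 0" unfolding smul_def by auto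
      then show "\<beta> \<in> {\<alpha>}" using D\<beta>0 by fastforce
    qed
    have "D a \<Lambda> = (\<Sum>\<beta>\<in>?S. smul (a \<beta>) (D (mono \<beta>)) \<Lambda>)"
      using Dsum[OF gG hD aS] unfolding fsum_def by simp
    also have "\<dots> = a \<alpha> * D (mono \<alpha>) \<Lambda>"
    proof (cases "\<alpha> \<in> ?S")
      case True then have "?S = {\<alpha>}" using S by blast
      then show ?thesis by (simp add: smul_def)
    next
      case False then have "?S = {}" using S by blast
      moreover have "a \<alpha> * D (mono \<alpha>) \<Lambda> = 0" using False la(1) unfolding smul_def by simp
      ultimately show ?thesis by simp
    qed
    finally show ?thesis .
  qed
  have e1: "D a \<Lambda> = q \<theta> * a \<alpha>" using lead \<Lambda>c by simp
  have e2: "D a \<Lambda> = (\<alpha> \<phi> * qq G D \<phi> \<theta>) * a \<alpha>" using Da\<Lambda> D\<alpha>\<Lambda> by (simp only: mult.commute)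
  have anz0: "a \<alpha> \<noteq> 0" using la(1) unfolding Supp_def by simp
  have q\<theta>: "q \<theta> = \<alpha> \<phi> * qq G D \<phi> \<theta>" using e1 e2 mult_right_cancel[OF anz0] by metis
  have "LC q = q \<theta>" unfolding LC_def LMq ..
  moreover have "LC (qq G D \<phi>) = qq G D \<phi> \<theta>" unfolding LC_def using qp[of \<phi>] \<theta>_def by simp
  ultimately show ?thesis using q\<theta> LEa LFa unfolding q_def by simp
qed

end

theorem mainTheorem3:
  fixes G :: "('p::linorder) mon set" and D :: "'p series \<Rightarrow> 'p series" and a :: "'p series"
  assumes "good_group G" and "hardy_type G D"
    and "is_series G a" and "a \<noteq> szero" and "LM a \<noteq> gone"
  shows "LT (sdiv G (D a) a) = smul (LE a) (LT (sdiv G (D (mono (ind (LF a)))) (mono (ind (LF a)))))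
    \<and> LM (sdiv G (D a) a) = theta G D (LF a)
    \<and> LC (sdiv G (D a) a) = LE a * LC (sdiv G (D (mono (ind (LF a)))) (mono (ind (LF a))))
    \<and> (\<forall>g. is_glb G (range (theta G D)) g \<longleftrightarrow>
           is_glb G {LM (sdiv G (D b) b) | b. is_series G b \<and> b \<noteq> szero \<and> LM b \<noteq> gone} g)"
proof -
  note gG = assms(1) and hD = assms(2)
  have LMq: "LM (sdiv G (D a) a) = theta G D (LF a)" by (rule K1[OF assms])
  have LCq: "LC (sdiv G (D a) a) = LE a * LC (sdiv G (D (mono (ind (LF a)))) (mono (ind (LF a))))"
    by (rule main_LC[OF assms])
  have LMqq: "LM (sdiv G (D (mono (ind (LF a)))) (mono (ind (LF a)))) = theta G D (LF a)"
    using qq_props[OF gG hD, of "LF a"] by blast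
  have LT: "LT (sdiv G (D a) a) = smul (LE a) (LT (sdiv G (D (mono (ind (LF a)))) (mono (ind (LF a)))))"
    unfolding LT_def LMq LCq LMqq by (simp add: smul_def fun_eq_iff)
  have sets: "range (theta G D) = {LM (sdiv G (D b) b) | b. is_series G b \<and> b \<noteq> szero \<and> LM b \<noteq> gone}"
  proof (intro equalityI subsetI)
    fix t assume "t \<in> range (theta G D)"
    then obtain p where t: "t = theta G D p" by blast
    have b: "is_series G (mono (ind p))" using is_series_mono[OF gG ind_G[OF gG]] .
    have "LM (mono (ind p)) = ind p" using LM_mono Hgrp_ind by blast
    then have "LM (mono (ind p)) \<noteq> gone" using ind_ne by simp
    moreover have "t = LM (sdiv G (D (mono (ind p))) (mono (ind p)))" using t unfolding theta_def .
    ultimately show "t \<in> {LM (sdiv G (D b) b) | b. is_series G b \<and> b \<noteq> szero \<and> LM b \<noteq> gone}"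
      using b mono_nz by blast
  next
    fix t assume "t \<in> {LM (sdiv G (D b) b) | b. is_series G b \<and> b \<noteq> szero \<and> LM b \<noteq> gone}"
    then obtain b where b: "t = LM (sdiv G (D b) b)" "is_series G b" "b \<noteq> szero" "LM b \<noteq> gone" by blast
    then have "t = theta G D (LF b)" using K1[OF gG hD b(2-4)] by simp
    then show "t \<in> range (theta G D)" by blast
  qed
  show ?thesis using LT LMq LCq sets by simp
qed


end
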